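(* Let $M$ be a duplicial module in a pre-additive category, and define $D_n=\sum_{i=0}^{n-1}b_n\kappa_n^i:M_n\to M_{n-1}$ for $n\ge0$ (so $D_0=0$). Then for all $n\ge0$, $$d_{n-1}D_n+D_{n+1}d_n=1-\pi_n\qquad\text{and}\qquad D_{n-1}D_n=0\ (n\ge1).$$
   Context: Let $\mathcal A$ be a pre-additive category. Let $\Lambda_+$ be the category with objects $[n]$, $n\ge0$, where $\Lambda_+([m],[n])$ is the set of weakly monotone $f:\mathbb Z\to\mathbb Z$ with $f(j+m+1)=f(j)+n+1$ for all $j$ and $f(0)\ge0$. Define $\varepsilon^n_i:[n-1]\to[n]$ ($n\ge1$, $0\le i\le n$) by $\varepsilon^n_i(j)=j$ for $0\le j<i$, $j+1$ for $i\le j\le n-1$, and $\eta^n_i:[n+1]\to[n]$ ($0\le i\le n+1$) by $\eta^n_i(j)=j$ for $0\le j\le i$, $j-1$ for $i<j\le n+1$. A duplicial module is a functor $M:\Lambda_+^{op}\to\mathcal A$; $M_n=M([n])$, $\partial_{n,i}=M(\varepsilon^n_i):M_n\to M_{n-1}$, $s_{n,i}=M(\eta^n_i):M_n\to M_{n+1}$. Convention $M_{-1}=0$, maps into/out of it zero. Define $b_n=\sum_{i=0}^n(-1)^i\partial_{n,i}$ ($b_0=0$), $d_n=\sum_{i=0}^{n+1}(-1)^is_{n,i}$ ($d_{-1}=0$), the Karoubi operator $\kappa_n=(-1)^n(\partial_{n+1,0}s_{n,n+1}-s_{n-1,n}\partial_{n,0})$ (so $\kappa_0=\partial_{1,0}s_{0,1}$),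 and the Dwyer–Kan operator $\pi_n=(-1)^n\partial_{n+1,0}\kappa_{n+1}^n s_{n,n+1}$. *)

theory Defs
  imports Main
begin

record ('o, 'm) preadd_cat =
  Obj :: "'o set"
  Hom :: "'o \<Rightarrow> 'o \<Rightarrow> 'm set"
  Cmp :: "'m \<Rightarrow> 'm \<Rightarrow> 'm"   (* Cmp g f = g \<circ> f  for f : X \<rightarrow> Y, g : Y \<rightarrow> Z *)
  Idm :: "'o \<Rightarrow> 'm"
  Zer :: "'o \<Rightarrow> 'o \<Rightarrow> 'm"
  Add :: "'m \<Rightarrow> 'm \<Rightarrow> 'm"
  Neg :: "'m \<Rightarrow> 'm"

definition preadditive :: "('o, 'm, 'z) preadd_cat_scheme \<Rightarrow> bool" where
  "preadditive C \<longleftrightarrow>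
     (\<forall>X Y X' Y'. Hom C X Y \<inter> Hom C X' Y' \<noteq> {} \<longrightarrow> X = X' \<and> Y = Y') \<and>
     (\<forall>X Y. Hom C X Y \<noteq> {} \<longrightarrow> X \<in> Obj C \<and> Y \<in> Obj C) \<and>
     (\<forall>X\<in>Obj C. Idm C X \<in> Hom C X X) \<and>
     (\<forall>X\<in>Obj C. \<forall>Y\<in>Obj C. \<forall>Z\<in>Obj C. \<forall>f\<in>Hom C X Y. \<forall>g\<in>Hom C Y Z.
         Cmp C g f \<in> Hom C X Z) \<and>
     (\<forall>W\<in>Obj C. \<forall>X\<in>Obj C. \<forall>Y\<in>Obj C. \<forall>Z\<in>Obj C.
        \<forall>f\<in>Hom C W X. \<forall>g\<in>Hom C X Y. \<forall>h\<in>Hom C Y Z.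
         Cmp C h (Cmp C g f) = Cmp C (Cmp C h g) f) \<and>
     (\<forall>X\<in>Obj C. \<forall>Y\<in>Obj C. \<forall>f\<in>Hom C X Y.
         Cmp C (Idm C Y) f = f \<and> Cmp C f (Idm C X) = f) \<and>
     (\<forall>X\<in>Obj C. \<forall>Y\<in>Obj C.
         Zer C X Y \<in> Hom C X Y \<and>
         (\<forall>f\<in>Hom C X Y. \<forall>g\<in>Hom C X Y. Add C f g \<in> Hom C X Y) \<and>
         (\<forall>f\<in>Hom C X Y. Neg C f \<in> Hom C X Y) \<and>
         (\<forall>f\<in>Hom C X Y. \<forall>g\<in>Hom C X Y. \<forall>h\<in>Hom C X Y.
             Add C (Add C f g) h = Add C f (Add C g h)) \<and>
         (\<forall>f\<in>Hom C X Y. \<forall>g\<in>Hom C X Y. Add C f g = Add C g f) \<and>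
         (\<forall>f\<in>Hom C X Y. Add C f (Zer C X Y) = f) \<and>
         (\<forall>f\<in>Hom C X Y. Add C f (Neg C f) = Zer C X Y)) \<and>
     (\<forall>X\<in>Obj C. \<forall>Y\<in>Obj C. \<forall>Z\<in>Obj C.
        \<forall>f\<in>Hom C X Y. \<forall>f'\<in>Hom C X Y. \<forall>g\<in>Hom C Y Z. \<forall>g'\<in>Hom C Y Z.
          Cmp C (Add C g g') f = Add C (Cmp C g f) (Cmp C g' f) \<and>
          Cmp C g (Add C f f') = Add C (Cmp C g f) (Cmp C g f'))"

text \<open>Morphisms [m] \<rightarrow> [n] of \<Lambda>_+: weakly monotone f : Z \<rightarrow> Z with
  f(j+m+1) = f(j)+n+1 for all j and f(0) \<ge> 0.\<close>
definition lam_hom :: "nat \<Rightarrow> nat \<Rightarrow> (int \<Rightarrow> int) \<Rightarrow> bool" where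
  "lam_hom m n f \<longleftrightarrow> mono f \<and> (\<forall>j. f (j + int m + 1) = f j + int n + 1) \<and> f 0 \<ge> 0"

text \<open>Face maps \<epsilon>^n_i : [n-1] \<rightarrow> [n] (n \<ge> 1) and degeneracies \<eta>^n_i : [n+1] \<rightarrow> [n],
  given on a fundamental domain and extended by the periodicity condition.\<close>
definition eps :: "nat \<Rightarrow> nat \<Rightarrow> int \<Rightarrow> int" where
  "eps n i j = (let q = j div int n; r = j mod int n
                in (if r < int i then r else r + 1) + q * (int n + 1))"

definition eta :: "nat \<Rightarrow> nat \<Rightarrow> int \<Rightarrow> int" where
  "eta n i j = (let q = j div (int n + 2); r = j mod (int n + 2)
                in (if r \<le> int i then r else r - 1) + q * (int n + 1))"

text \<open>A duplicial module: a functor M : \<Lambda>_+^op \<rightarrow> C, given by objects Mo n = M_n and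
  Mf m n f = M(f) : M_n \<rightarrow> M_m for f : [m] \<rightarrow> [n] in \<Lambda>_+.\<close>
definition duplicial ::
  "('o, 'm, 'z) preadd_cat_scheme \<Rightarrow> (nat \<Rightarrow> 'o) \<Rightarrow> (nat \<Rightarrow> nat \<Rightarrow> (int \<Rightarrow> int) \<Rightarrow> 'm) \<Rightarrow> bool" where
  "duplicial C Mo Mf \<longleftrightarrow>
     preadditive C \<and>
     (\<forall>n. Mo n \<in> Obj C) \<and>
     (\<forall>m n f. lam_hom m n f \<longrightarrow> Mf m n f \<in> Hom C (Mo n) (Mo m)) \<and>
     (\<forall>n. Mf n n id = Idm C (Mo n)) \<and>
     (\<forall>l m n f g. lam_hom l m f \<longrightarrow> lam_hom m n g \<longrightarrow>
        Mf l n (g \<circ> f) = Cmp C (Mf l m f) (Mf m n g))"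

definition csum :: "('o, 'm, 'z) preadd_cat_scheme \<Rightarrow> 'o \<Rightarrow> 'o \<Rightarrow> (nat \<Rightarrow> 'm) \<Rightarrow> nat \<Rightarrow> 'm" where
  "csum C X Y f k = foldr (Add C) (map f [0..<k]) (Zer C X Y)"

definition csgn :: "('o, 'm, 'z) preadd_cat_scheme \<Rightarrow> nat \<Rightarrow> 'm \<Rightarrow> 'm" where
  "csgn C i f = (if even i then f else Neg C f)"

definition face where "face C Mo Mf n i = Mf (n - 1) n (eps n i)"
definition dgn where "dgn C Mo Mf n i = Mf (n + 1) n (eta n i)"

definition bop where
  "bop C Mo Mf n = csum C (Mo n) (Mo (n - 1)) (\<lambda>i. csgn C i (face C Mo Mf n i)) (n + 1)"

definition dop where
  "dop C Mo Mf n = csum C (Mo n) (Mo (n + 1)) (\<lambda>i. csgn C i (dgn C Mo Mf n i)) (n + 2)"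

definition kappa where
  "kappa C Mo Mf n = csgn C n
     (if n = 0 then Cmp C (face C Mo Mf 1 0) (dgn C Mo Mf 0 1)
      else Add C (Cmp C (face C Mo Mf (n + 1) 0) (dgn C Mo Mf n (n + 1)))
                 (Neg C (Cmp C (dgn C Mo Mf (n - 1) n) (face C Mo Mf n 0))))"

definition kpow where
  "kpow C Mo Mf n k = ((Cmp C (kappa C Mo Mf n)) ^^ k) (Idm C (Mo n))"

definition piop where
  "piop C Mo Mf n = csgn C n
     (Cmp C (face C Mo Mf (n + 1) 0) (Cmp C (kpow C Mo Mf (n + 1) n) (dgn C Mo Mf n (n + 1))))"

definition Dop where
  "Dop C Mo Mf n = csum C (Mo n) (Mo (n - 1)) (\<lambda>i. Cmp C (bop C Mo Mf n) (kpow C Mo Mf n i)) n"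

end

theory Submission
  imports Defs
begin

locale padd =
  fixes C :: "('o, 'm, 'z) preadd_cat_scheme"
  assumes pa: "preadditive C"
begin

lemmas pa' = pa[unfolded preadditive_def]
lemmas pa1 = pa'[THEN conjunct1]
lemmas pa2 = pa'[THEN conjunct2, THEN conjunct1]
lemmas pa3 = pa'[THEN conjunct2, THEN conjunct2, THEN conjunct1]
lemmas pa4 = pa'[THEN conjunct2, THEN conjunct2, THEN conjunct2, THEN conjunct1]
lemmas pa5 = pa'[THEN conjunct2, THEN conjunct2, THEN conjunct2, THEN conjunct2, THEN conjunct1]
lemmas pa6 = pa'[THEN conjunct2, THEN conjunct2, THEN conjunct2, THEN conjunct2, THEN conjunct2, THEN conjunct1]
lemmas pa7 = pa'[THEN conjunct2, THEN conjunct2, THEN conjunct2, THEN conjunct2, THEN conjunct2, THEN conjunct2, THEN conjunct1]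
lemmas pa8 = pa'[THEN conjunct2, THEN conjunct2, THEN conjunct2, THEN conjunct2, THEN conjunct2, THEN conjunct2, THEN conjunct2]

lemma hom_obj: "f \<in> Hom C X Y \<Longrightarrow> X \<in> Obj C \<and> Y \<in> Obj C"
  using pa2 by blast

lemma idm_in: "X \<in> Obj C \<Longrightarrow> Idm C X \<in> Hom C X X"
  using pa3 by blast

lemma cmp_in: "f \<in> Hom C X Y \<Longrightarrow> g \<in> Hom C Y Z \<Longrightarrow> Cmp C g f \<in> Hom C X Z"
  using pa4 hom_obj[of f X Y] hom_obj[of g Y Z] by blast

lemma assoc: "f \<in> Hom C W X \<Longrightarrow> g \<in> Hom C X Y \<Longrightarrow> h \<in> Hom C Y Z \<Longrightarrow>
   Cmp C h (Cmp C g f) = Cmp C (Cmp C h g) f"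
  using pa5 hom_obj[of f W X] hom_obj[of g X Y] hom_obj[of h Y Z] by blast

lemma idl: "f \<in> Hom C X Y \<Longrightarrow> Cmp C (Idm C Y) f = f"
  using pa6 hom_obj[of f X Y] by blast

lemma idr: "f \<in> Hom C X Y \<Longrightarrow> Cmp C f (Idm C X) = f"
  using pa6 hom_obj[of f X Y] by blast

lemma zer_in: "X \<in> Obj C \<Longrightarrow> Y \<in> Obj C \<Longrightarrow> Zer C X Y \<in> Hom C X Y"
  using pa7 by blast

lemma add_in: "f \<in> Hom C X Y \<Longrightarrow> g \<in> Hom C X Y \<Longrightarrow> Add C f g \<in> Hom C X Y"
  using pa7 hom_obj[of f X Y] by blast

lemma neg_in: "f \<in> Hom C X Y \<Longrightarrow> Neg C f \<in> Hom C X Y"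
  using pa7 hom_obj[of f X Y] by blast

lemma add_assoc: "f \<in> Hom C X Y \<Longrightarrow> g \<in> Hom C X Y \<Longrightarrow> h \<in> Hom C X Y \<Longrightarrow>
   Add C (Add C f g) h = Add C f (Add C g h)"
  using pa7 hom_obj[of f X Y] by blast

lemma add_comm: "f \<in> Hom C X Y \<Longrightarrow> g \<in> Hom C X Y \<Longrightarrow> Add C f g = Add C g f"
  using pa7 hom_obj[of f X Y] by blast

lemma add_zer: "f \<in> Hom C X Y \<Longrightarrow> Add C f (Zer C X Y) = f"
  using pa7 hom_obj[of f X Y] by blast

lemma add_neg: "f \<in> Hom C X Y \<Longrightarrow> Add C f (Neg C f) = Zer C X Y"
  using pa7 hom_obj[of f X Y] by blast

lemma distl: "f \<in> Hom C X Y \<Longrightarrow> g \<in> Hom C Y Z \<Longrightarrow> g' \<in> Hom C Y Z \<Longrightarrow>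
   Cmp C (Add C g g') f = Add C (Cmp C g f) (Cmp C g' f)"
  using pa8 hom_obj[of f X Y] hom_obj[of g Y Z] by blast

lemma distr: "f \<in> Hom C X Y \<Longrightarrow> f' \<in> Hom C X Y \<Longrightarrow> g \<in> Hom C Y Z \<Longrightarrow>
   Cmp C g (Add C f f') = Add C (Cmp C g f) (Cmp C g f')"
  using pa8 hom_obj[of f X Y] hom_obj[of g Y Z] by blast

lemma zer_add: "f \<in> Hom C X Y \<Longrightarrow> Add C (Zer C X Y) f = f"
proof -
  assume f: "f \<in> Hom C X Y"
  then have z: "Zer C X Y \<in> Hom C X Y" using hom_obj zer_in by blast
  show ?thesis using add_comm[OF z f] add_zer[OF f] by simp
qed

lemma neg_add_l: "f \<in> Hom C X Y \<Longrightarrow> Add C (Neg C f) f = Zer C X Y"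
  using add_comm[OF neg_in] add_neg by metis

lemma add_left_comm: "f \<in> Hom C X Y \<Longrightarrow> g \<in> Hom C X Y \<Longrightarrow> h \<in> Hom C X Y \<Longrightarrow>
   Add C f (Add C g h) = Add C g (Add C f h)"
proof -
  assume f: "f \<in> Hom C X Y" and g: "g \<in> Hom C X Y" and h: "h \<in> Hom C X Y"
  have "Add C f (Add C g h) = Add C (Add C f g) h" using add_assoc[OF f g h] by simp
  also have "\<dots> = Add C (Add C g f) h" using add_comm[OF f g] by simp
  also have "\<dots> = Add C g (Add C f h)" using add_assoc[OF g f h] by simp
  finally show ?thesis .
qed

lemma add_cancel_l: "a \<in> Hom C X Y \<Longrightarrow> b \<in> Hom C X Y \<Longrightarrow> c \<in> Hom C X Y \<Longrightarrow>
   Add C a b = Add C a c \<Longrightarrow> b = c"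
proof -
  assume a: "a \<in> Hom C X Y" and b: "b \<in> Hom C X Y" and c: "c \<in> Hom C X Y"
    and e: "Add C a b = Add C a c"
  have "b = Add C (Add C (Neg C a) a) b" using neg_add_l[OF a] zer_add[OF b] by simp
  also have "\<dots> = Add C (Neg C a) (Add C a b)" using add_assoc[OF neg_in[OF a] a b] by simp
  also have "\<dots> = Add C (Neg C a) (Add C a c)" using e by simp
  also have "\<dots> = Add C (Add C (Neg C a) a) c" using add_assoc[OF neg_in[OF a] a c] by simp
  also have "\<dots> = c" using neg_add_l[OF a] zer_add[OF c] by simp
  finally show ?thesis .
qed

lemma neg_unique: "a \<in> Hom C X Y \<Longrightarrow> b \<in> Hom C X Y \<Longrightarrow> Add C a b = Zer C X Y \<Longrightarrow> Neg C a = b"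
  using add_cancel_l[OF _ neg_in] add_neg by metis

lemma neg_neg: "a \<in> Hom C X Y \<Longrightarrow> Neg C (Neg C a) = a"
  using neg_unique[OF neg_in] neg_add_l by metis

lemma neg_zer: "X \<in> Obj C \<Longrightarrow> Y \<in> Obj C \<Longrightarrow> Neg C (Zer C X Y) = Zer C X Y"
  using neg_unique[OF zer_in zer_in] add_zer[OF zer_in] by metis

lemma neg_add: "a \<in> Hom C X Y \<Longrightarrow> b \<in> Hom C X Y \<Longrightarrow>
   Neg C (Add C a b) = Add C (Neg C a) (Neg C b)"
proof -
  assume a: "a \<in> Hom C X Y" and b: "b \<in> Hom C X Y"
  have na: "Neg C a \<in> Hom C X Y" and nb: "Neg C b \<in> Hom C X Y" using a b neg_in by auto
  have "Add C (Add C a b) (Add C (Neg C a) (Neg C b)) = Add C a (Add C b (Add C (Neg C a) (Neg C b)))"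
    using add_assoc[OF a b add_in[OF na nb]] by simp
  also have "\<dots> = Add C a (Add C (Neg C a) (Add C b (Neg C b)))"
    using add_left_comm[OF b na nb] by simp
  also have "\<dots> = Add C a (Neg C a)" using add_neg[OF b] add_zer[OF na] by simp
  also have "\<dots> = Zer C X Y" using add_neg[OF a] .
  finally show ?thesis using neg_unique[OF add_in[OF a b] add_in[OF na nb]] by simp
qed

lemma cmp_zer_r: "g \<in> Hom C Y Z \<Longrightarrow> X \<in> Obj C \<Longrightarrow> Cmp C g (Zer C X Y) = Zer C X Z"
proof -
  assume g: "g \<in> Hom C Y Z" and X: "X \<in> Obj C"
  have Y: "Y \<in> Obj C" "Z \<in> Obj C" using g hom_obj by auto
  have z: "Zer C X Y \<in> Hom C X Y" using X Y zer_in by auto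
  have c: "Cmp C g (Zer C X Y) \<in> Hom C X Z" using z g cmp_in by blast
  have "Add C (Cmp C g (Zer C X Y)) (Cmp C g (Zer C X Y)) = Add C (Cmp C g (Zer C X Y)) (Zer C X Z)"
    using distr[OF z z g] z by (simp add: add_zer c)
  then show ?thesis using add_cancel_l[OF c c] c zer_in[OF X Y(2)] by blast
qed

lemma cmp_zer_l: "f \<in> Hom C X Y \<Longrightarrow> Z \<in> Obj C \<Longrightarrow> Cmp C (Zer C Y Z) f = Zer C X Z"
proof -
  assume f: "f \<in> Hom C X Y" and Z: "Z \<in> Obj C"
  have Y: "X \<in> Obj C" "Y \<in> Obj C" using f hom_obj by auto
  have z: "Zer C Y Z \<in> Hom C Y Z" using Z Y zer_in by auto
  have c: "Cmp C (Zer C Y Z) f \<in> Hom C X Z" using z f cmp_in by blast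
  have "Add C (Cmp C (Zer C Y Z) f) (Cmp C (Zer C Y Z) f) = Add C (Cmp C (Zer C Y Z) f) (Zer C X Z)"
    using distl[OF f z z] z by (simp add: add_zer c)
  then show ?thesis using add_cancel_l[OF c c] c zer_in[OF Y(1) Z] by blast
qed

lemma cmp_neg_r: "f \<in> Hom C X Y \<Longrightarrow> g \<in> Hom C Y Z \<Longrightarrow> Cmp C g (Neg C f) = Neg C (Cmp C g f)"
proof -
  assume f: "f \<in> Hom C X Y" and g: "g \<in> Hom C Y Z"
  have "Add C (Cmp C g f) (Cmp C g (Neg C f)) = Zer C X Z"
    using distr[OF f neg_in[OF f] g] add_neg[OF f] cmp_zer_r[OF g] hom_obj[OF f] by simp
  then show ?thesis using f g by (metis cmp_in neg_in neg_unique)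
qed

lemma cmp_neg_l: "f \<in> Hom C X Y \<Longrightarrow> g \<in> Hom C Y Z \<Longrightarrow> Cmp C (Neg C g) f = Neg C (Cmp C g f)"
proof -
  assume f: "f \<in> Hom C X Y" and g: "g \<in> Hom C Y Z"
  have "Add C (Cmp C g f) (Cmp C (Neg C g) f) = Zer C X Z"
    using distl[OF f g neg_in[OF g]] add_neg[OF g] cmp_zer_l[OF f] hom_obj[OF g] by simp
  then show ?thesis using f g by (metis cmp_in neg_in neg_unique)
qed

end

context padd
begin

abbreviation (input) HH where "HH X Y \<equiv> Hom C X Y"

lemma add_swap4: "a \<in> Hom C X Y \<Longrightarrow> b \<in> Hom C X Y \<Longrightarrow> c \<in> Hom C X Y \<Longrightarrow> d \<in> Hom C X Y \<Longrightarrow>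
  Add C (Add C a b) (Add C c d) = Add C (Add C a c) (Add C b d)"
proof -
  assume a: "a \<in> Hom C X Y" and b: "b \<in> Hom C X Y" and c: "c \<in> Hom C X Y" and d: "d \<in> Hom C X Y"
  have "Add C (Add C a b) (Add C c d) = Add C a (Add C b (Add C c d))"
    using add_assoc[OF a b add_in[OF c d]] .
  also have "\<dots> = Add C a (Add C c (Add C b d))" using add_left_comm[OF b c d] by simp
  also have "\<dots> = Add C (Add C a c) (Add C b d)" using add_assoc[OF a c add_in[OF b d]] by simp
  finally show ?thesis .
qed

lemma foldr_in: "set xs \<subseteq> Hom C X Y \<Longrightarrow> a \<in> Hom C X Y \<Longrightarrow> foldr (Add C) xs a \<in> Hom C X Y"
  by (induction xs) (auto intro: add_in)

lemma foldr_shift: "set xs \<subseteq> Hom C X Y \<Longrightarrow> a \<in> Hom C X Y \<Longrightarrow> b \<in> Hom C X Y \<Longrightarrow>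
  foldr (Add C) xs (Add C a b) = Add C (foldr (Add C) xs a) b"
proof (induction xs)
  case Nil then show ?case by simp
next
  case (Cons x xs)
  then have x: "x \<in> Hom C X Y" and r: "foldr (Add C) xs a \<in> Hom C X Y" using foldr_in by auto
  show ?case using Cons add_assoc[OF x r Cons.prems(3)] by simp
qed

lemma csum_0[simp]: "csum C X Y f 0 = Zer C X Y"
  by (simp add: csum_def)

lemma csum_Suc: "X \<in> Obj C \<Longrightarrow> Y \<in> Obj C \<Longrightarrow> (\<And>i. i < Suc k \<Longrightarrow> f i \<in> Hom C X Y) \<Longrightarrow>
   csum C X Y f (Suc k) = Add C (csum C X Y f k) (f k)"
proof -
  assume X: "X \<in> Obj C" and Y: "Y \<in> Obj C" and f: "\<And>i. i < Suc k \<Longrightarrow> f i \<in> Hom C X Y"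
  have s: "set (map f [0..<k]) \<subseteq> Hom C X Y" using f by auto
  have fk: "f k \<in> Hom C X Y" using f by auto
  have z: "Zer C X Y \<in> Hom C X Y" using X Y zer_in by auto
  have "csum C X Y f (Suc k) = foldr (Add C) (map f [0..<k]) (Add C (f k) (Zer C X Y))"
    by (simp add: csum_def)
  also have "\<dots> = foldr (Add C) (map f [0..<k]) (Add C (Zer C X Y) (f k))"
    using add_zer[OF fk] zer_add[OF fk] by simp
  also have "\<dots> = Add C (csum C X Y f k) (f k)"
    using foldr_shift[OF s z fk] by (simp add: csum_def)
  finally show ?thesis .
qed

lemma csum_in: "X \<in> Obj C \<Longrightarrow> Y \<in> Obj C \<Longrightarrow> (\<And>i. i < k \<Longrightarrow> f i \<in> Hom C X Y) \<Longrightarrow>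
   csum C X Y f k \<in> Hom C X Y"
  unfolding csum_def by (rule foldr_in) (auto intro: zer_in)

lemma csum_cong: "(\<And>i. i < k \<Longrightarrow> f i = g i) \<Longrightarrow> csum C X Y f k = csum C X Y g k"
proof -
  assume a: "\<And>i. i < k \<Longrightarrow> f i = g i"
  have e: "map f [0..<k] = map g [0..<k]" using a by simp
  show ?thesis unfolding csum_def e ..
qed

lemma csum_add: "X \<in> Obj C \<Longrightarrow> Y \<in> Obj C \<Longrightarrow> (\<And>i. i < k \<Longrightarrow> f i \<in> Hom C X Y) \<Longrightarrow>
   (\<And>i. i < k \<Longrightarrow> g i \<in> Hom C X Y) \<Longrightarrow>
   csum C X Y (\<lambda>i. Add C (f i) (g i)) k = Add C (csum C X Y f k) (csum C X Y g k)"
proof (induction k)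
  case 0 then show ?case using zer_in add_zer by simp
next
  case (Suc k)
  have A: "csum C X Y f k \<in> Hom C X Y" "csum C X Y g k \<in> Hom C X Y"
    using Suc.prems by (auto intro!: csum_in)
  have B: "f k \<in> Hom C X Y" "g k \<in> Hom C X Y" using Suc.prems by auto
  have "csum C X Y (\<lambda>i. Add C (f i) (g i)) (Suc k) =
        Add C (Add C (csum C X Y f k) (csum C X Y g k)) (Add C (f k) (g k))"
    using Suc by (subst csum_Suc) (auto intro: add_in)
  also have "\<dots> = Add C (Add C (csum C X Y f k) (f k)) (Add C (csum C X Y g k) (g k))"
    using add_swap4[OF A(1) A(2) B(1) B(2)] .
  also have "\<dots> = Add C (csum C X Y f (Suc k)) (csum C X Y g (Suc k))"
    using Suc.prems by (simp add: csum_Suc)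
  finally show ?case .
qed

lemma csum_neg: "X \<in> Obj C \<Longrightarrow> Y \<in> Obj C \<Longrightarrow> (\<And>i. i < k \<Longrightarrow> f i \<in> Hom C X Y) \<Longrightarrow>
   csum C X Y (\<lambda>i. Neg C (f i)) k = Neg C (csum C X Y f k)"
proof (induction k)
  case 0 then show ?case using neg_zer by simp
next
  case (Suc k)
  have A: "csum C X Y f k \<in> Hom C X Y" using Suc.prems by (auto intro!: csum_in)
  have B: "f k \<in> Hom C X Y" using Suc.prems by auto
  show ?case using Suc A B by (simp add: csum_Suc neg_in neg_add)
qed

lemma csum_cmp_r: "X \<in> Obj C \<Longrightarrow> Y \<in> Obj C \<Longrightarrow> (\<And>i. i < k \<Longrightarrow> f i \<in> Hom C X Y) \<Longrightarrow>
   g \<in> Hom C Y Z \<Longrightarrow>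
   Cmp C g (csum C X Y f k) = csum C X Z (\<lambda>i. Cmp C g (f i)) k"
proof (induction k)
  case 0 then show ?case using cmp_zer_r by simp
next
  case (Suc k)
  have Z: "Z \<in> Obj C" using Suc.prems hom_obj by blast
  have A: "csum C X Y f k \<in> Hom C X Y" using Suc.prems by (auto intro!: csum_in)
  have B: "f k \<in> Hom C X Y" using Suc.prems by auto
  have C1: "\<And>i. i < Suc k \<Longrightarrow> Cmp C g (f i) \<in> Hom C X Z" using Suc.prems cmp_in by blast
  have "Cmp C g (csum C X Y f (Suc k)) = Cmp C g (Add C (csum C X Y f k) (f k))"
    using Suc.prems by (simp add: csum_Suc)
  also have "\<dots> = Add C (Cmp C g (csum C X Y f k)) (Cmp C g (f k))"
    using distr[OF A B Suc.prems(4)] .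
  also have "\<dots> = csum C X Z (\<lambda>i. Cmp C g (f i)) (Suc k)"
    using Suc C1 Z by (simp add: csum_Suc)
  finally show ?case .
qed

lemma csum_cmp_l: "X \<in> Obj C \<Longrightarrow> Y \<in> Obj C \<Longrightarrow> (\<And>i. i < k \<Longrightarrow> g i \<in> Hom C X Y) \<Longrightarrow>
   f \<in> Hom C W X \<Longrightarrow>
   Cmp C (csum C X Y g k) f = csum C W Y (\<lambda>i. Cmp C (g i) f) k"
proof (induction k)
  case 0 then show ?case using cmp_zer_l by simp
next
  case (Suc k)
  have W: "W \<in> Obj C" using Suc.prems hom_obj by blast
  have A: "csum C X Y g k \<in> Hom C X Y" using Suc.prems by (auto intro!: csum_in)
  have B: "g k \<in> Hom C X Y" using Suc.prems by auto
  have C1: "\<And>i. i < Suc k \<Longrightarrow> Cmp C (g i) f \<in> Hom C W Y" using Suc.prems cmp_in by blast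
  have "Cmp C (csum C X Y g (Suc k)) f = Cmp C (Add C (csum C X Y g k) (g k)) f"
    using Suc.prems by (simp add: csum_Suc)
  also have "\<dots> = Add C (Cmp C (csum C X Y g k) f) (Cmp C (g k) f)"
    using distl[OF Suc.prems(4) A B] .
  also have "\<dots> = csum C W Y (\<lambda>i. Cmp C (g i) f) (Suc k)"
    using Suc C1 W by (simp add: csum_Suc)
  finally show ?case .
qed

lemma csum_split: "X \<in> Obj C \<Longrightarrow> Y \<in> Obj C \<Longrightarrow> (\<And>i. i < a + b \<Longrightarrow> f i \<in> Hom C X Y) \<Longrightarrow>
   csum C X Y f (a + b) = Add C (csum C X Y f a) (csum C X Y (\<lambda>i. f (a + i)) b)"
proof (induction b)
  case 0 then show ?case using add_zer csum_in by simp
next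
  case (Suc b)
  have A: "csum C X Y f a \<in> Hom C X Y" using Suc.prems by (auto intro!: csum_in)
  have A2: "csum C X Y (\<lambda>i. f (a + i)) b \<in> Hom C X Y" using Suc.prems by (auto intro!: csum_in)
  have B: "f (a + b) \<in> Hom C X Y" using Suc.prems by auto
  have "csum C X Y f (a + Suc b) = Add C (csum C X Y f (a + b)) (f (a + b))"
    using Suc.prems by (simp add: csum_Suc)
  also have "\<dots> = Add C (Add C (csum C X Y f a) (csum C X Y (\<lambda>i. f (a + i)) b)) (f (a + b))"
    using Suc by simp
  also have "\<dots> = Add C (csum C X Y f a) (csum C X Y (\<lambda>i. f (a + i)) (Suc b))"
    using Suc.prems A A2 B by (simp add: csum_Suc add_assoc)
  finally show ?case .
qed

lemma csum_zero: "X \<in> Obj C \<Longrightarrow> Y \<in> Obj C \<Longrightarrow> (\<And>i. i < k \<Longrightarrow> f i = Zer C X Y) \<Longrightarrow>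
   csum C X Y f k = Zer C X Y"
proof (induction k)
  case 0 then show ?case by simp
next
  case (Suc k)
  have "csum C X Y f (Suc k) = Add C (csum C X Y f k) (f k)"
    using Suc.prems zer_in by (intro csum_Suc) auto
  then show ?case using Suc zer_in add_zer by simp
qed

lemma csum_first: "X \<in> Obj C \<Longrightarrow> Y \<in> Obj C \<Longrightarrow> (\<And>i. i < Suc k \<Longrightarrow> f i \<in> Hom C X Y) \<Longrightarrow>
   csum C X Y f (Suc k) = Add C (f 0) (csum C X Y (\<lambda>i. f (Suc i)) k)"
proof -
  assume a: "X \<in> Obj C" "Y \<in> Obj C" "\<And>i. i < Suc k \<Longrightarrow> f i \<in> Hom C X Y"
  have "csum C X Y f (Suc 0) = Add C (csum C X Y f 0) (f 0)" using a by (intro csum_Suc) auto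
  then have e: "csum C X Y f (Suc 0) = f 0" using zer_add a by simp
  have "csum C X Y f (1 + k) = Add C (csum C X Y f 1) (csum C X Y (\<lambda>i. f (1 + i)) k)"
    using a by (intro csum_split) auto
  then show ?thesis using e by simp
qed

lemma csum_one: "f 0 \<in> Hom C X Y \<Longrightarrow> csum C X Y f (Suc 0) = f 0"
proof -
  assume a: "f 0 \<in> Hom C X Y"
  have "csum C X Y f (Suc 0) = Add C (csum C X Y f 0) (f 0)" using a hom_obj by (intro csum_Suc) auto
  then show ?thesis using zer_add a by simp
qed

lemma csum_tele: "X \<in> Obj C \<Longrightarrow> Y \<in> Obj C \<Longrightarrow> (\<And>i. i \<le> k \<Longrightarrow> f i \<in> Hom C X Y) \<Longrightarrow>
   csum C X Y (\<lambda>i. Add C (f i) (Neg C (f (Suc i)))) k = Add C (f 0) (Neg C (f k))"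
proof (induction k)
  case 0 then show ?case by (simp add: add_neg)
next
  case (Suc k)
  have a: "f 0 \<in> Hom C X Y" "f k \<in> Hom C X Y" "f (Suc k) \<in> Hom C X Y" using Suc.prems by auto
  have "csum C X Y (\<lambda>i. Add C (f i) (Neg C (f (Suc i)))) (Suc k) =
        Add C (Add C (f 0) (Neg C (f k))) (Add C (f k) (Neg C (f (Suc k))))"
    using Suc by (subst csum_Suc) (auto intro!: add_in neg_in)
  also have "\<dots> = Add C (f 0) (Add C (Neg C (f k)) (Add C (f k) (Neg C (f (Suc k)))))"
    using a by (simp add: add_assoc neg_in add_in)
  also have "\<dots> = Add C (f 0) (Add C (Add C (Neg C (f k)) (f k)) (Neg C (f (Suc k))))"
    using add_assoc[OF neg_in[OF a(2)] a(2) neg_in[OF a(3)]] by simp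
  also have "\<dots> = Add C (f 0) (Neg C (f (Suc k)))"
    using a by (simp add: neg_add_l zer_add neg_in)
  finally show ?case .
qed

lemma csum_swap: "X \<in> Obj C \<Longrightarrow> Y \<in> Obj C \<Longrightarrow> (\<And>i j. i < k \<Longrightarrow> j < m \<Longrightarrow> F i j \<in> Hom C X Y) \<Longrightarrow>
   csum C X Y (\<lambda>i. csum C X Y (\<lambda>j. F i j) m) k = csum C X Y (\<lambda>j. csum C X Y (\<lambda>i. F i j) k) m"
proof (induction k)
  case 0 then show ?case by (simp add: csum_zero)
next
  case (Suc k)
  have "csum C X Y (\<lambda>i. csum C X Y (\<lambda>j. F i j) m) (Suc k) =
     Add C (csum C X Y (\<lambda>i. csum C X Y (\<lambda>j. F i j) m) k) (csum C X Y (\<lambda>j. F k j) m)"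
    using Suc.prems by (subst csum_Suc) (auto intro!: csum_in)
  also have "\<dots> = Add C (csum C X Y (\<lambda>j. csum C X Y (\<lambda>i. F i j) k) m) (csum C X Y (\<lambda>j. F k j) m)"
    using Suc by simp
  also have "\<dots> = csum C X Y (\<lambda>j. Add C (csum C X Y (\<lambda>i. F i j) k) (F k j)) m"
    using Suc.prems by (subst csum_add) (auto intro!: csum_in)
  also have "\<dots> = csum C X Y (\<lambda>j. csum C X Y (\<lambda>i. F i j) (Suc k)) m"
    using Suc.prems by (intro csum_cong) (simp add: csum_Suc)
  finally show ?case .
qed

lemma csum_tri: "X \<in> Obj C \<Longrightarrow> Y \<in> Obj C \<Longrightarrow> (\<And>i j. j \<le> i \<Longrightarrow> i < N \<Longrightarrow> F i j \<in> Hom C X Y) \<Longrightarrow>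
   csum C X Y (\<lambda>i. csum C X Y (\<lambda>j. F i j) (Suc i)) N =
   csum C X Y (\<lambda>j. csum C X Y (\<lambda>k. F (j + k) j) (N - j)) N"
proof (induction N)
  case 0 then show ?case by simp
next
  case (Suc N)
  have in1: "\<And>j. j < Suc N \<Longrightarrow> csum C X Y (\<lambda>k. F (j + k) j) (N - j) \<in> Hom C X Y"
    using Suc.prems by (intro csum_in) auto
  have "csum C X Y (\<lambda>i. csum C X Y (\<lambda>j. F i j) (Suc i)) (Suc N) =
     Add C (csum C X Y (\<lambda>i. csum C X Y (\<lambda>j. F i j) (Suc i)) N) (csum C X Y (\<lambda>j. F N j) (Suc N))"
    using Suc.prems by (subst csum_Suc) (auto intro!: csum_in)
  also have "\<dots> = Add C (csum C X Y (\<lambda>j. csum C X Y (\<lambda>k. F (j + k) j) (N - j)) N) (csum C X Y (\<lambda>j. F N j) (Suc N))"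
    using Suc by simp
  also have "\<dots> = Add C (csum C X Y (\<lambda>j. csum C X Y (\<lambda>k. F (j + k) j) (N - j)) (Suc N)) (csum C X Y (\<lambda>j. F N j) (Suc N))"
    using Suc.prems in1 add_zer[OF csum_in[OF Suc.prems(1,2) in1]] by (subst (2) csum_Suc) auto
  also have "\<dots> = csum C X Y (\<lambda>j. Add C (csum C X Y (\<lambda>k. F (j + k) j) (N - j)) (F N j)) (Suc N)"
    using Suc.prems in1 by (subst csum_add) auto
  also have "\<dots> = csum C X Y (\<lambda>j. csum C X Y (\<lambda>k. F (j + k) j) (Suc N - j)) (Suc N)"
  proof (rule csum_cong)
    fix j assume j: "j < Suc N"
    then have e: "Suc N - j = Suc (N - j)" by simp
    show "Add C (csum C X Y (\<lambda>k. F (j + k) j) (N - j)) (F N j) = csum C X Y (\<lambda>k. F (j + k) j) (Suc N - j)"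
      unfolding e using Suc.prems j by (subst csum_Suc) auto
  qed
  finally show ?case .
qed

end

context padd
begin

lemma csgn_in: "f \<in> Hom C X Y \<Longrightarrow> csgn C i f \<in> Hom C X Y"
  by (simp add: csgn_def neg_in)

lemma csgn_0[simp]: "csgn C 0 f = f"
  by (simp add: csgn_def)

lemma csgn_Suc: "f \<in> Hom C X Y \<Longrightarrow> csgn C (Suc i) f = Neg C (csgn C i f)"
  by (simp add: csgn_def neg_neg)

lemma csgn_cmp_r: "f \<in> Hom C X Y \<Longrightarrow> g \<in> Hom C Y Z \<Longrightarrow> Cmp C g (csgn C i f) = csgn C i (Cmp C g f)"
  by (simp add: csgn_def cmp_neg_r)

lemma csgn_cmp_l: "f \<in> Hom C X Y \<Longrightarrow> g \<in> Hom C Y Z \<Longrightarrow> Cmp C (csgn C i g) f = csgn C i (Cmp C g f)"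
  by (simp add: csgn_def cmp_neg_l)

lemma csgn_neg: "f \<in> Hom C X Y \<Longrightarrow> csgn C i (Neg C f) = Neg C (csgn C i f)"
  by (simp add: csgn_def)

lemma csgn_add_idx: "f \<in> Hom C X Y \<Longrightarrow> csgn C (i + j) f = csgn C i (csgn C j f)"
  by (auto simp add: csgn_def neg_neg neg_in)

lemma csgn_Add: "a \<in> Hom C X Y \<Longrightarrow> b \<in> Hom C X Y \<Longrightarrow> csgn C i (Add C a b) = Add C (csgn C i a) (csgn C i b)"
  by (simp add: csgn_def neg_add)

lemma csgn_csgn: "f \<in> Hom C X Y \<Longrightarrow> csgn C i (csgn C i f) = f"
  by (simp add: csgn_def neg_neg)

lemma csgn_zer: "X \<in> Obj C \<Longrightarrow> Y \<in> Obj C \<Longrightarrow> csgn C i (Zer C X Y) = Zer C X Y"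
  by (simp add: csgn_def neg_zer)

lemma tri_cancel:
  assumes X: "X \<in> Obj C" and Y: "Y \<in> Obj C"
    and G: "\<And>i j. i < N \<Longrightarrow> j < Suc N \<Longrightarrow> G i j \<in> Hom C X Y"
    and R: "\<And>i j. i < j \<Longrightarrow> j \<le> N \<Longrightarrow> G i j = Neg C (G (j - 1) i)"
  shows "csum C X Y (\<lambda>i. csum C X Y (\<lambda>j. G i j) (Suc N)) N = Zer C X Y"
proof -
  define S where "S = csum C X Y (\<lambda>j. csum C X Y (\<lambda>k. G (j + k) j) (N - j)) N"
  have Sin: "S \<in> Hom C X Y" unfolding S_def using X Y G by (intro csum_in) auto
  have step: "csum C X Y (\<lambda>j. G i j) (Suc N) =
      Add C (csum C X Y (\<lambda>j. G i j) (Suc i)) (Neg C (csum C X Y (\<lambda>k. G (i + k) i) (N - i)))"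
    if i: "i < N" for i
  proof -
    have e: "Suc N = Suc i + (N - i)" using i by simp
    have "csum C X Y (\<lambda>j. G i j) (Suc N) =
       Add C (csum C X Y (\<lambda>j. G i j) (Suc i)) (csum C X Y (\<lambda>k. G i (Suc i + k)) (N - i))"
      unfolding e using X Y G i by (intro csum_split) auto
    also have "csum C X Y (\<lambda>k. G i (Suc i + k)) (N - i) = csum C X Y (\<lambda>k. Neg C (G (i + k) i)) (N - i)"
      using R i by (intro csum_cong) auto
    also have "\<dots> = Neg C (csum C X Y (\<lambda>k. G (i + k) i) (N - i))"
      using X Y G i by (intro csum_neg) auto
    finally show ?thesis .
  qed
  have "csum C X Y (\<lambda>i. csum C X Y (\<lambda>j. G i j) (Suc N)) N =
     csum C X Y (\<lambda>i. Add C (csum C X Y (\<lambda>j. G i j) (Suc i)) (Neg C (csum C X Y (\<lambda>k. G (i + k) i) (N - i)))) N"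
    using step by (intro csum_cong) auto
  also have "\<dots> = Add C (csum C X Y (\<lambda>i. csum C X Y (\<lambda>j. G i j) (Suc i)) N)
                        (csum C X Y (\<lambda>i. Neg C (csum C X Y (\<lambda>k. G (i + k) i) (N - i))) N)"
    using X Y G by (intro csum_add) (auto intro!: csum_in neg_in)
  also have "csum C X Y (\<lambda>i. csum C X Y (\<lambda>j. G i j) (Suc i)) N = S"
    unfolding S_def using X Y G by (intro csum_tri) auto
  also have "csum C X Y (\<lambda>i. Neg C (csum C X Y (\<lambda>k. G (i + k) i) (N - i))) N = Neg C S"
    unfolding S_def using X Y G by (intro csum_neg) (auto intro!: csum_in)
  finally show ?thesis using add_neg[OF Sin] by simp
qed

end

lemma per_ext:
  assumes P: "\<And>j. f (j + int m + 1) = f j + int n + 1"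
  shows "f (j + k * (int m + 1)) = f j + k * (int n + 1)"
proof (induction k rule: int_induct[where k = 0])
  case base then show ?case by simp
next
  case (step1 i)
  have "f (j + (i + 1) * (int m + 1)) = f ((j + i * (int m + 1)) + int m + 1)"
    by (simp add: algebra_simps)
  also have "\<dots> = f (j + i * (int m + 1)) + int n + 1" using P by simp
  finally show ?case using step1 by (simp add: algebra_simps)
next
  case (step2 i)
  have "f (j + i * (int m + 1)) = f ((j + (i - 1) * (int m + 1)) + int m + 1)"
    by (simp add: algebra_simps)
  also have "\<dots> = f (j + (i - 1) * (int m + 1)) + int n + 1" using P by simp
  finally show ?case using step2 by (simp add: algebra_simps)
qed

lemma lam_eq:
  assumes f: "lam_hom m n f" and g: "lam_hom m n g"
    and E: "\<And>x. 0 \<le> x \<Longrightarrow> x \<le> int m \<Longrightarrow> f x = g x"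
  shows "f = g"
proof
  fix j
  define r where "r = j mod (int m + 1)"
  define q where "q = j div (int m + 1)"
  have j: "j = r + q * (int m + 1)" unfolding r_def q_def using mod_div_mult_eq[of j "int m + 1"] by simp
  have r: "0 \<le> r" "r \<le> int m" unfolding r_def
    using pos_mod_bound[of "int m + 1" j] pos_mod_sign[of "int m + 1" j] by auto
  have "f j = f r + q * (int n + 1)" unfolding j
    by (rule per_ext) (use f in \<open>simp add: lam_hom_def\<close>)
  moreover have "g j = g r + q * (int n + 1)" unfolding j
    by (rule per_ext) (use g in \<open>simp add: lam_hom_def\<close>)
  ultimately show "f j = g j" using E[OF r] by simp
qed

lemma lam_comp: "lam_hom l m f \<Longrightarrow> lam_hom m n g \<Longrightarrow> lam_hom l n (g \<circ> f)"
  unfolding lam_hom_def mono_def by (auto simp: add.assoc) (meson order_trans)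

lemma lam_id: "lam_hom n n id"
  unfolding lam_hom_def by (simp add: mono_def)

lemma lam_ext:
  assumes mono: "\<And>r r'. 0 \<le> r \<Longrightarrow> r \<le> r' \<Longrightarrow> r' \<le> int m \<Longrightarrow> g r \<le> g r'"
    and bnd: "\<And>r. 0 \<le> r \<Longrightarrow> r \<le> int m \<Longrightarrow> 0 \<le> g r \<and> g r \<le> int n + 1"
  shows "lam_hom m n (\<lambda>j. g (j mod (int m + 1)) + (j div (int m + 1)) * (int n + 1))"
  unfolding lam_hom_def
proof (intro conjI allI)
  let ?p = "int m + 1"
  show "mono (\<lambda>j. g (j mod ?p) + j div ?p * (int n + 1))"
  proof (rule monoI)
    fix j j' :: int assume jj: "j \<le> j'"
    have q: "j div ?p \<le> j' div ?p" using jj by (simp add: zdiv_mono1)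
    have r1: "0 \<le> j mod ?p" "j mod ?p \<le> int m"
      using pos_mod_bound[of "int m + 1" j] pos_mod_sign[of "int m + 1" j] by auto
    have r2: "0 \<le> j' mod ?p" "j' mod ?p \<le> int m"
      using pos_mod_bound[of "int m + 1" j'] pos_mod_sign[of "int m + 1" j'] by auto
    show "g (j mod ?p) + j div ?p * (int n + 1) \<le> g (j' mod ?p) + j' div ?p * (int n + 1)"
    proof (cases "j div ?p = j' div ?p")
      case True
      have e1: "j div ?p * ?p + j mod ?p = j" by (rule div_mult_mod_eq)
      have e2: "j' div ?p * ?p + j' mod ?p = j'" by (rule div_mult_mod_eq)
      have "j mod ?p \<le> j' mod ?p" using e1 e2 jj unfolding True by linarith
      then show ?thesis using True mono r1 r2 by simp
    next
      case False
      then have q1: "j div ?p + 1 \<le> j' div ?p" using q by simp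
      have a: "g (j mod ?p) \<le> int n + 1" "0 \<le> g (j' mod ?p)" using bnd r1 r2 by auto
      have "(j div ?p + 1) * (int n + 1) \<le> j' div ?p * (int n + 1)"
        using q1 by (intro mult_right_mono) auto
      then show ?thesis using a by (simp add: algebra_simps)
    qed
  qed
next
  fix j
  have a: "(j + int m + 1) mod (int m + 1) = j mod (int m + 1)"
    by (subst add.assoc, subst mod_add_self2) auto
  have b: "(j + int m + 1) div (int m + 1) = j div (int m + 1) + 1"
    by (subst add.assoc, subst div_add_self2) auto
  show "g ((j + int m + 1) mod (int m + 1)) + (j + int m + 1) div (int m + 1) * (int n + 1) =
        g (j mod (int m + 1)) + j div (int m + 1) * (int n + 1) + int n + 1"
    unfolding a b by (simp add: algebra_simps)
next
  show "0 \<le> g (0 mod (int m + 1)) + 0 div (int m + 1) * (int n + 1)" using bnd[of 0] by simp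
qed

lemma lam_ext':
  assumes "p = int m + 1" "P = int n + 1"
    and "\<And>r r'. 0 \<le> r \<Longrightarrow> r \<le> r' \<Longrightarrow> r' \<le> int m \<Longrightarrow> g r \<le> g r'"
    and "\<And>r. 0 \<le> r \<Longrightarrow> r \<le> int m \<Longrightarrow> 0 \<le> g r \<and> g r \<le> int n + 1"
  shows "lam_hom m n (\<lambda>j. g (j mod p) + (j div p) * P)"
  unfolding assms(1,2) by (rule lam_ext) (use assms in auto)

lemma lam_eps: "i \<le> Suc k \<Longrightarrow> lam_hom k (Suc k) (eps (Suc k) i)"
  unfolding eps_def Let_def by (rule lam_ext') auto

lemma lam_eta: "i \<le> Suc n \<Longrightarrow> lam_hom (Suc n) n (eta n i)"
  unfolding eta_def Let_def by (rule lam_ext') auto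

lemma eps_val: "0 \<le> x \<Longrightarrow> x < int n \<Longrightarrow> eps n i x = (if x < int i then x else x + 1)"
  unfolding eps_def by (simp add: Let_def)

lemma eps_val_n: "0 < n \<Longrightarrow> eps n i (int n) = (if 0 < i then int n + 1 else int n + 2)"
  unfolding eps_def by (simp add: Let_def)

lemma eta_val: "0 \<le> x \<Longrightarrow> x \<le> int n + 1 \<Longrightarrow> eta n i x = (if x \<le> int i then x else x - 1)"
  unfolding eta_def by (simp add: Let_def)

lemma eta_val_top: "eta n i (int n + 2) = int n + 1"
  unfolding eta_def by (simp add: Let_def)


lemma rel_DD:
  assumes "i < j" "j \<le> n + 2"
  shows "eps (Suc (Suc n)) j \<circ> eps (Suc n) i = eps (Suc (Suc n)) i \<circ> eps (Suc n) (j - 1)"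
proof (rule lam_eq[where m = n and n = "Suc (Suc n)"])
  show "lam_hom n (Suc (Suc n)) (eps (Suc (Suc n)) j \<circ> eps (Suc n) i)"
    using assms by (intro lam_comp[where m="Suc n"] lam_eps) auto
  show "lam_hom n (Suc (Suc n)) (eps (Suc (Suc n)) i \<circ> eps (Suc n) (j - 1))"
    using assms by (intro lam_comp[where m="Suc n"] lam_eps) auto
  fix x :: int assume x: "0 \<le> x" "x \<le> int n"
  show "(eps (Suc (Suc n)) j \<circ> eps (Suc n) i) x = (eps (Suc (Suc n)) i \<circ> eps (Suc n) (j - 1)) x"
    using assms x by (auto simp: eps_val)
qed

lemma rel_FS_lt:
  assumes "i < j" "j \<le> n + 2" "\<not> (i = 0 \<and> j = n + 2)"
  shows "eta (Suc n) j \<circ> eps (Suc (Suc n)) i = eps (Suc n) i \<circ> eta n (j - 1)"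
proof (rule lam_eq[where m = "Suc n" and n = "Suc n"])
  show "lam_hom (Suc n) (Suc n) (eta (Suc n) j \<circ> eps (Suc (Suc n)) i)"
    using assms by (intro lam_comp[where m="Suc (Suc n)"] lam_eps lam_eta) auto
  show "lam_hom (Suc n) (Suc n) (eps (Suc n) i \<circ> eta n (j - 1))"
    using assms by (intro lam_comp[where m="n"] lam_eps lam_eta) auto
  fix x :: int assume x: "0 \<le> x" "x \<le> int (Suc n)"
  show "(eta (Suc n) j \<circ> eps (Suc (Suc n)) i) x = (eps (Suc n) i \<circ> eta n (j - 1)) x"
  proof (cases "x = int (Suc n)")
    case True
    have en: "eps (Suc n) k (1 + int n) = (if 0 < k then int n + 2 else int n + 3)" for k
      using eps_val_n[of "Suc n" k] by simp
    show ?thesis using True assms x en by (auto simp: eps_val eta_val)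
  next
    case False
    then show ?thesis using assms x by (auto simp: eps_val eta_val)
  qed
qed

lemma rel_FS_id:
  assumes "i = j \<or> i = Suc j" "j \<le> n"
  shows "eta n j \<circ> eps (Suc n) i = id"
proof (rule lam_eq[where m = n and n = n])
  show "lam_hom n n (eta n j \<circ> eps (Suc n) i)"
    using assms by (intro lam_comp[where m="Suc n"] lam_eps lam_eta) auto
  show "lam_hom n n id" by (rule lam_id)
  fix x :: int assume x: "0 \<le> x" "x \<le> int n"
  show "(eta n j \<circ> eps (Suc n) i) x = id x"
    using assms x by (auto simp: eps_val eta_val)
qed

lemma rel_FS_top:
  "eta n (Suc n) \<circ> eps (Suc n) (Suc n) = id"
proof (rule lam_eq[where m = n and n = n])
  show "lam_hom n n (eta n (Suc n) \<circ> eps (Suc n) (Suc n))"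
    by (intro lam_comp[where m="Suc n"] lam_eps lam_eta) auto
  show "lam_hom n n id" by (rule lam_id)
  fix x :: int assume x: "0 \<le> x" "x \<le> int n"
  show "(eta n (Suc n) \<circ> eps (Suc n) (Suc n)) x = id x"
    using x by (auto simp: eps_val eta_val)
qed

lemma rel_FS_gt:
  assumes "Suc j < i" "i \<le> n + 2"
  shows "eta (Suc n) j \<circ> eps (Suc (Suc n)) i = eps (Suc n) (i - 1) \<circ> eta n j"
proof (rule lam_eq[where m = "Suc n" and n = "Suc n"])
  show "lam_hom (Suc n) (Suc n) (eta (Suc n) j \<circ> eps (Suc (Suc n)) i)"
    using assms by (intro lam_comp[where m="Suc (Suc n)"] lam_eps lam_eta) auto
  show "lam_hom (Suc n) (Suc n) (eps (Suc n) (i - 1) \<circ> eta n j)"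
    using assms by (intro lam_comp[where m="n"] lam_eps lam_eta) auto
  fix x :: int assume x: "0 \<le> x" "x \<le> int (Suc n)"
  show "(eta (Suc n) j \<circ> eps (Suc (Suc n)) i) x = (eps (Suc n) (i - 1) \<circ> eta n j) x"
  proof (cases "x = int (Suc n)")
    case True
    have en: "eps (Suc n) k (1 + int n) = (if 0 < k then int n + 2 else int n + 3)" for k
      using eps_val_n[of "Suc n" k] by simp
    show ?thesis using True assms x en by (auto simp: eps_val eta_val)
  next
    case False
    then show ?thesis using assms x by (auto simp: eps_val eta_val)
  qed
qed

lemma rel_SS:
  assumes "i < j" "j \<le> n + 2"
  shows "eta n i \<circ> eta (Suc n) j = eta n (j - 1) \<circ> eta (Suc n) i"
proof (rule lam_eq[where m = "Suc (Suc n)" and n = n])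
  show "lam_hom (Suc (Suc n)) n (eta n i \<circ> eta (Suc n) j)"
    using assms by (intro lam_comp[where m="Suc n"] lam_eta) auto
  show "lam_hom (Suc (Suc n)) n (eta n (j - 1) \<circ> eta (Suc n) i)"
    using assms by (intro lam_comp[where m="Suc n"] lam_eta) auto
  fix x :: int assume x: "0 \<le> x" "x \<le> int (Suc (Suc n))"
  have top: "eta n k (int n + 2) = int n + 1" for k by (rule eta_val_top)
  show "(eta n i \<circ> eta (Suc n) j) x = (eta n (j - 1) \<circ> eta (Suc n) i) x"
  proof (cases "x = int n + 2")
    case True
    then show ?thesis using assms x top by (auto simp: eta_val)
  next
    case False
    then show ?thesis using assms x by (auto simp: eta_val)
  qed
qed


locale dup = padd C for C :: "('o, 'm, 'z) preadd_cat_scheme" +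
  fixes Mo :: "nat \<Rightarrow> 'o" and Mf :: "nat \<Rightarrow> nat \<Rightarrow> (int \<Rightarrow> int) \<Rightarrow> 'm"
  assumes dupl: "duplicial C Mo Mf"
begin

lemma obj[simp]: "Mo n \<in> Obj C"
  using dupl unfolding duplicial_def by blast

lemma mf_in: "lam_hom m n f \<Longrightarrow> Mf m n f \<in> Hom C (Mo n) (Mo m)"
  using dupl unfolding duplicial_def by blast

lemma mf_id: "Mf n n id = Idm C (Mo n)"
  using dupl unfolding duplicial_def by blast

lemma mf_comp: "lam_hom l m f \<Longrightarrow> lam_hom m n g \<Longrightarrow> Cmp C (Mf l m f) (Mf m n g) = Mf l n (g \<circ> f)"
  using dupl unfolding duplicial_def by (metis (no_types))

abbreviation "fc \<equiv> face C Mo Mf"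
abbreviation "dg \<equiv> dgn C Mo Mf"
abbreviation "II n \<equiv> Idm C (Mo n)"

lemma face_in[simp]: "i \<le> Suc n \<Longrightarrow> fc (Suc n) i \<in> Hom C (Mo (Suc n)) (Mo n)"
  unfolding face_def by (simp add: mf_in lam_eps)

lemma dgn_in[simp]: "i \<le> Suc n \<Longrightarrow> dg n i \<in> Hom C (Mo n) (Mo (Suc n))"
  unfolding dgn_def by (simp add: mf_in lam_eta)

lemma II_in[simp]: "II n \<in> Hom C (Mo n) (Mo n)"
  by (simp add: idm_in)

lemma DD:
  assumes "i < j" "j \<le> n + 2"
  shows "Cmp C (fc (Suc n) i) (fc (Suc (Suc n)) j) = Cmp C (fc (Suc n) (j - 1)) (fc (Suc (Suc n)) i)"
proof -
  have "Cmp C (fc (Suc n) i) (fc (Suc (Suc n)) j) = Mf n (Suc (Suc n)) (eps (Suc (Suc n)) j \<circ> eps (Suc n) i)"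
    unfolding face_def using assms by (simp add: mf_comp lam_eps)
  also have "\<dots> = Mf n (Suc (Suc n)) (eps (Suc (Suc n)) i \<circ> eps (Suc n) (j - 1))"
    using rel_DD[OF assms] by simp
  also have "\<dots> = Cmp C (fc (Suc n) (j - 1)) (fc (Suc (Suc n)) i)"
    unfolding face_def using assms by (simp add: mf_comp lam_eps)
  finally show ?thesis .
qed

lemma FS_lt:
  assumes "i < j" "j \<le> n + 2" "\<not> (i = 0 \<and> j = n + 2)"
  shows "Cmp C (fc (Suc (Suc n)) i) (dg (Suc n) j) = Cmp C (dg n (j - 1)) (fc (Suc n) i)"
proof -
  have "Cmp C (fc (Suc (Suc n)) i) (dg (Suc n) j) = Mf (Suc n) (Suc n) (eta (Suc n) j \<circ> eps (Suc (Suc n)) i)"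
    unfolding face_def dgn_def using assms by (simp add: mf_comp lam_eps lam_eta)
  also have "\<dots> = Mf (Suc n) (Suc n) (eps (Suc n) i \<circ> eta n (j - 1))"
    using rel_FS_lt[OF assms] by simp
  also have "\<dots> = Cmp C (dg n (j - 1)) (fc (Suc n) i)"
    unfolding face_def dgn_def using assms by (simp add: mf_comp lam_eps lam_eta)
  finally show ?thesis .
qed

lemma FS_gt:
  assumes "Suc j < i" "i \<le> n + 2"
  shows "Cmp C (fc (Suc (Suc n)) i) (dg (Suc n) j) = Cmp C (dg n j) (fc (Suc n) (i - 1))"
proof -
  have "Cmp C (fc (Suc (Suc n)) i) (dg (Suc n) j) = Mf (Suc n) (Suc n) (eta (Suc n) j \<circ> eps (Suc (Suc n)) i)"
    unfolding face_def dgn_def using assms by (simp add: mf_comp lam_eps lam_eta)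
  also have "\<dots> = Mf (Suc n) (Suc n) (eps (Suc n) (i - 1) \<circ> eta n j)"
    using rel_FS_gt[OF assms] by simp
  also have "\<dots> = Cmp C (dg n j) (fc (Suc n) (i - 1))"
    unfolding face_def dgn_def using assms by (simp add: mf_comp lam_eps lam_eta)
  finally show ?thesis .
qed

lemma FS_id:
  assumes "i = j \<or> i = Suc j" "j \<le> n"
  shows "Cmp C (fc (Suc n) i) (dg n j) = II n"
proof -
  have "Cmp C (fc (Suc n) i) (dg n j) = Mf n n (eta n j \<circ> eps (Suc n) i)"
    unfolding face_def dgn_def using assms by (auto simp: mf_comp lam_eps lam_eta)
  also have "\<dots> = II n" using rel_FS_id[OF assms] mf_id by simp
  finally show ?thesis .
qed

lemma FS_top: "Cmp C (fc (Suc n) (Suc n)) (dg n (Suc n)) = II n"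
proof -
  have "Cmp C (fc (Suc n) (Suc n)) (dg n (Suc n)) = Mf n n (eta n (Suc n) \<circ> eps (Suc n) (Suc n))"
    unfolding face_def dgn_def by (auto simp: mf_comp lam_eps lam_eta)
  also have "\<dots> = II n" using rel_FS_top mf_id by simp
  finally show ?thesis .
qed

lemma SS:
  assumes "i < j" "j \<le> n + 2"
  shows "Cmp C (dg (Suc n) j) (dg n i) = Cmp C (dg (Suc n) i) (dg n (j - 1))"
proof -
  have "Cmp C (dg (Suc n) j) (dg n i) = Mf (Suc (Suc n)) n (eta n i \<circ> eta (Suc n) j)"
    unfolding dgn_def using assms by (simp add: mf_comp lam_eta)
  also have "\<dots> = Mf (Suc (Suc n)) n (eta n (j - 1) \<circ> eta (Suc n) i)"
    using rel_SS[OF assms] by simp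
  also have "\<dots> = Cmp C (dg (Suc n) i) (dg n (j - 1))"
    unfolding dgn_def using assms by (simp add: mf_comp lam_eta)
  finally show ?thesis .
qed

end

context dup
begin

lemma csgn_cmp2: "b \<in> Hom C X Y \<Longrightarrow> a \<in> Hom C Y Z \<Longrightarrow>
  Cmp C (csgn C i a) (csgn C j b) = csgn C (i + j) (Cmp C a b)"
  using csgn_cmp_l[OF csgn_in[of b X Y j], of a Z i] csgn_cmp_r[of b X Y a Z j]
    csgn_add_idx[OF cmp_in[of b X Y a Z], of i j] by simp

abbreviation "bb \<equiv> bop C Mo Mf"
abbreviation "dd \<equiv> dop C Mo Mf"
abbreviation "kk \<equiv> kappa C Mo Mf"
abbreviation "KP \<equiv> kpow C Mo Mf"

lemma bop_Suc: "bb (Suc n) = csum C (Mo (Suc n)) (Mo n) (\<lambda>i. csgn C i (fc (Suc n) i)) (Suc (Suc n))"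
  unfolding bop_def by simp

lemma dop_eq: "dd n = csum C (Mo n) (Mo (Suc n)) (\<lambda>i. csgn C i (dg n i)) (Suc (Suc n))"
  unfolding dop_def by simp

lemma bop_in[simp]: "bb (Suc n) \<in> Hom C (Mo (Suc n)) (Mo n)"
  unfolding bop_Suc by (rule csum_in) (auto intro: csgn_in)

lemma dop_in[simp]: "dd n \<in> Hom C (Mo n) (Mo (Suc n))"
  unfolding dop_eq by (rule csum_in) (auto intro: csgn_in)

abbreviation "tt n \<equiv> Cmp C (fc (Suc n) 0) (dg n (Suc n))"
abbreviation "ee m \<equiv> Cmp C (dg m (Suc m)) (fc (Suc m) 0)"

lemma tt_in[simp]: "tt n \<in> Hom C (Mo n) (Mo n)"
  by (rule cmp_in[where Y="Mo (Suc n)"]) auto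

lemma ee_in[simp]: "ee m \<in> Hom C (Mo (Suc m)) (Mo (Suc m))"
  by (rule cmp_in[where Y="Mo m"]) auto

lemma kappa_0: "kk 0 = tt 0"
  unfolding kappa_def by simp

lemma kappa_Suc: "kk (Suc m) = csgn C (Suc m) (Add C (tt (Suc m)) (Neg C (ee m)))"
  unfolding kappa_def by simp

lemma kappa_in[simp]: "kk n \<in> Hom C (Mo n) (Mo n)"
  by (cases n) (auto simp: kappa_0 kappa_Suc intro!: csgn_in add_in neg_in)

lemma kpow_0[simp]: "KP n 0 = II n"
  unfolding kpow_def by simp

lemma kpow_Suc: "KP n (Suc k) = Cmp C (kk n) (KP n k)"
  unfolding kpow_def by simp

lemma kpow_in[simp]: "KP n k \<in> Hom C (Mo n) (Mo n)"
  by (induction k) (auto simp: kpow_Suc intro: cmp_in)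

lemma kpow_Suc': "KP n (Suc k) = Cmp C (KP n k) (kk n)"
proof (induction k)
  case 0 then show ?case by (simp add: kpow_Suc idl[OF kappa_in] idr[OF kappa_in])
next
  case (Suc k)
  have "KP n (Suc (Suc k)) = Cmp C (kk n) (Cmp C (KP n k) (kk n))"
    using Suc by (simp add: kpow_Suc)
  also have "\<dots> = Cmp C (KP n (Suc k)) (kk n)"
    by (simp add: assoc[of _ "Mo n" "Mo n" _ "Mo n" _ "Mo n"] kpow_Suc)
  finally show ?case .
qed

lemma bb_sq: "Cmp C (bb (Suc n)) (bb (Suc (Suc n))) = Zer C (Mo (Suc (Suc n))) (Mo n)"
proof -
  let ?X = "Mo (Suc (Suc n))" and ?Y = "Mo n"
  define G where "G i j = csgn C (i + j) (Cmp C (fc (Suc n) i) (fc (Suc (Suc n)) j))" for i j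
  have "Cmp C (bb (Suc n)) (bb (Suc (Suc n))) =
     csum C ?X ?Y (\<lambda>i. Cmp C (csgn C i (fc (Suc n) i)) (bb (Suc (Suc n)))) (Suc (Suc n))"
    unfolding bop_Suc[of n] by (rule csum_cmp_l) (auto intro: csgn_in)
  also have "\<dots> = csum C ?X ?Y (\<lambda>i. csum C ?X ?Y (\<lambda>j. G i j) (Suc (Suc (Suc n)))) (Suc (Suc n))"
  proof (rule csum_cong)
    fix i assume i: "i < Suc (Suc n)"
    have "Cmp C (csgn C i (fc (Suc n) i)) (bb (Suc (Suc n))) =
       csum C ?X ?Y (\<lambda>j. Cmp C (csgn C i (fc (Suc n) i)) (csgn C j (fc (Suc (Suc n)) j))) (Suc (Suc (Suc n)))"
      unfolding bop_Suc[of "Suc n"] using i by (intro csum_cmp_r) (auto intro: csgn_in)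
    also have "\<dots> = csum C ?X ?Y (\<lambda>j. G i j) (Suc (Suc (Suc n)))"
      unfolding G_def using i
      by (intro csum_cong) (simp add: csgn_cmp2[where X="Mo (Suc (Suc n))" and Y="Mo (Suc n)" and Z="Mo n"])
    finally show "Cmp C (csgn C i (fc (Suc n) i)) (bb (Suc (Suc n))) =
       csum C ?X ?Y (\<lambda>j. G i j) (Suc (Suc (Suc n)))" .
  qed
  also have "\<dots> = Zer C ?X ?Y"
  proof (rule tri_cancel)
    show "G i j \<in> Hom C ?X ?Y" if "i < Suc (Suc n)" "j < Suc (Suc (Suc n))" for i j
      unfolding G_def using that by (auto intro!: csgn_in cmp_in[where Y="Mo (Suc n)"])
    show "G i j = Neg C (G (j - 1) i)" if ij: "i < j" "j \<le> Suc (Suc n)" for i j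
    proof -
      obtain j' where j': "j = Suc j'" using ij by (cases j) auto
      have m: "Cmp C (fc (Suc n) j') (fc (Suc (Suc n)) i) \<in> Hom C ?X ?Y" using ij j' by (auto intro!: cmp_in[where Y="Mo (Suc n)"])
      have "G i j = csgn C (Suc (j' + i)) (Cmp C (fc (Suc n) j') (fc (Suc (Suc n)) i))"
        unfolding G_def using DD[of i j n] ij j' by (simp add: add.commute)
      then show ?thesis unfolding G_def using j' m by (simp add: csgn_Suc)
    qed
  qed auto
  finally show ?thesis .
qed

lemma dd_sq: "Cmp C (dd (Suc n)) (dd n) = Zer C (Mo n) (Mo (Suc (Suc n)))"
proof -
  let ?X = "Mo n" and ?Y = "Mo (Suc (Suc n))"
  define G where "G i j = csgn C (i + j) (Cmp C (dg (Suc n) j) (dg n i))" for i j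
  have "Cmp C (dd (Suc n)) (dd n) =
     csum C ?X ?Y (\<lambda>j. Cmp C (csgn C j (dg (Suc n) j)) (dd n)) (Suc (Suc (Suc n)))"
    unfolding dop_eq[of "Suc n"] by (rule csum_cmp_l) (auto intro: csgn_in)
  also have "\<dots> = csum C ?X ?Y (\<lambda>j. csum C ?X ?Y (\<lambda>i. G i j) (Suc (Suc n))) (Suc (Suc (Suc n)))"
  proof (rule csum_cong)
    fix j assume j: "j < Suc (Suc (Suc n))"
    have "Cmp C (csgn C j (dg (Suc n) j)) (dd n) =
       csum C ?X ?Y (\<lambda>i. Cmp C (csgn C j (dg (Suc n) j)) (csgn C i (dg n i))) (Suc (Suc n))"
      unfolding dop_eq[of n] using j by (intro csum_cmp_r) (auto intro: csgn_in)
    also have "\<dots> = csum C ?X ?Y (\<lambda>i. G i j) (Suc (Suc n))"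
      unfolding G_def using j
      by (intro csum_cong) (simp add: csgn_cmp2[where X="Mo n" and Y="Mo (Suc n)" and Z="Mo (Suc (Suc n))"] add.commute)
    finally show "Cmp C (csgn C j (dg (Suc n) j)) (dd n) = csum C ?X ?Y (\<lambda>i. G i j) (Suc (Suc n))" .
  qed
  also have "\<dots> = csum C ?X ?Y (\<lambda>i. csum C ?X ?Y (\<lambda>j. G i j) (Suc (Suc (Suc n)))) (Suc (Suc n))"
    unfolding G_def by (rule csum_swap[symmetric]) (auto intro!: csgn_in cmp_in[where Y="Mo (Suc n)"])
  also have "\<dots> = Zer C ?X ?Y"
  proof (rule tri_cancel)
    show "G i j \<in> Hom C ?X ?Y" if "i < Suc (Suc n)" "j < Suc (Suc (Suc n))" for i j
      unfolding G_def using that by (auto intro!: csgn_in cmp_in[where Y="Mo (Suc n)"])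
    show "G i j = Neg C (G (j - 1) i)" if ij: "i < j" "j \<le> Suc (Suc n)" for i j
    proof -
      obtain j' where j': "j = Suc j'" using ij by (cases j) auto
      have m: "Cmp C (dg (Suc n) i) (dg n j') \<in> Hom C ?X ?Y" using ij j' by (auto intro!: cmp_in[where Y="Mo (Suc n)"])
      have "G i j = csgn C (Suc (j' + i)) (Cmp C (dg (Suc n) i) (dg n j'))"
        unfolding G_def using SS[of i j n] ij j' by (simp add: add.commute)
      then show ?thesis unfolding G_def using j' m by (simp add: csgn_Suc)
    qed
  qed auto
  finally show ?thesis .
qed

end

context dup
begin

lemma csum_two: "f 0 \<in> Hom C X Y \<Longrightarrow> f 1 \<in> Hom C X Y \<Longrightarrow> csum C X Y f (Suc (Suc 0)) = Add C (f 0) (f 1)"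
proof -
  assume a: "f 0 \<in> Hom C X Y" "f 1 \<in> Hom C X Y"
  have "csum C X Y f (Suc (Suc 0)) = Add C (csum C X Y f (Suc 0)) (f (Suc 0))"
    using a hom_obj[of "f 0" X Y] by (intro csum_Suc) (auto simp: less_Suc_eq)
  then show ?thesis using csum_one[of f X Y] a by simp
qed

lemma cmp_sub_l: "f \<in> Hom C X Y \<Longrightarrow> a \<in> Hom C Y Z \<Longrightarrow> b \<in> Hom C Y Z \<Longrightarrow>
  Cmp C (Add C a (Neg C b)) f = Add C (Cmp C a f) (Neg C (Cmp C b f))"
  using distl[of f X Y a Z "Neg C b"] cmp_neg_l[of f X Y b Z] neg_in[of b Y Z] by simp

lemma cmp_sub_r: "f \<in> Hom C X Y \<Longrightarrow> g \<in> Hom C X Y \<Longrightarrow> a \<in> Hom C Y Z \<Longrightarrow>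
  Cmp C a (Add C f (Neg C g)) = Add C (Cmp C a f) (Neg C (Cmp C a g))"
  using distr[of f X Y "Neg C g" a Z] cmp_neg_r[of g X Y a Z] neg_in[of g X Y] by simp

lemma cmp_sub_sub: "c \<in> Hom C X Y \<Longrightarrow> e \<in> Hom C X Y \<Longrightarrow> a \<in> Hom C Y Z \<Longrightarrow> b \<in> Hom C Y Z \<Longrightarrow>
  Cmp C (Add C a (Neg C b)) (Add C c (Neg C e)) =
  Add C (Add C (Cmp C a c) (Neg C (Cmp C a e))) (Neg C (Add C (Cmp C b c) (Neg C (Cmp C b e))))"
proof -
  assume c: "c \<in> Hom C X Y" and e: "e \<in> Hom C X Y" and a: "a \<in> Hom C Y Z" and b: "b \<in> Hom C Y Z"
  have ce: "Add C c (Neg C e) \<in> Hom C X Y" using c e by (intro add_in neg_in)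
  show ?thesis using cmp_sub_l[OF ce a b] cmp_sub_r[OF c e a] cmp_sub_r[OF c e b] by simp
qed

lemma bd0: "Cmp C (bb 1) (dd 0) = Add C (II 0) (Neg C (kk 0))"
proof -
  have m: "fc 1 0 \<in> Hom C (Mo 1) (Mo 0)" "fc 1 1 \<in> Hom C (Mo 1) (Mo 0)"
    "dg 0 0 \<in> Hom C (Mo 0) (Mo 1)" "dg 0 1 \<in> Hom C (Mo 0) (Mo 1)" by auto
  have b: "bb 1 = Add C (fc 1 0) (Neg C (fc 1 1))"
    using bop_Suc[of 0] csum_two[of "\<lambda>i. csgn C i (fc 1 i)" "Mo 1" "Mo 0"] m
    by (simp add: csgn_def neg_in)
  have d: "dd 0 = Add C (dg 0 0) (Neg C (dg 0 1))"
    using dop_eq[of 0] csum_two[of "\<lambda>i. csgn C i (dg 0 i)" "Mo 0" "Mo 1"] m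
    by (simp add: csgn_def neg_in)
  have r: "Cmp C (fc 1 0) (dg 0 0) = II 0" "Cmp C (fc 1 1) (dg 0 0) = II 0"
      "Cmp C (fc 1 1) (dg 0 1) = II 0" "Cmp C (fc 1 0) (dg 0 1) = kk 0"
    using FS_id[of 0 0 0] FS_id[of 1 0 0] FS_top[of 0] kappa_0 by auto
  have i: "II 0 \<in> Hom C (Mo 0) (Mo 0)" "kk 0 \<in> Hom C (Mo 0) (Mo 0)" by auto
  show ?thesis unfolding b d cmp_sub_sub[OF m(3) m(4) m(1) m(2)] r using i
    by (simp add: add_neg[OF i(1)] neg_zer add_zer[OF add_in[OF i(1) neg_in[OF i(2)]]])
qed

end

context dup
begin

definition Ls where "Ls m l = csum C (Mo m) (Mo (Suc m)) (\<lambda>j. csgn C j (dg m j)) l"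
definition Us where "Us m l = csum C (Mo m) (Mo (Suc m)) (\<lambda>k. csgn C (l + k) (dg m (l + k))) (Suc (Suc m) - l)"

lemma Ls_in[simp]: "l \<le> Suc (Suc m) \<Longrightarrow> Ls m l \<in> Hom C (Mo m) (Mo (Suc m))"
  unfolding Ls_def by (rule csum_in) (auto intro: csgn_in)

lemma Us_in[simp]: "Us m l \<in> Hom C (Mo m) (Mo (Suc m))"
  unfolding Us_def by (rule csum_in) (auto intro: csgn_in)

lemma LU: "l \<le> Suc (Suc m) \<Longrightarrow> Add C (Ls m l) (Us m l) = dd m"
proof -
  assume l: "l \<le> Suc (Suc m)"
  have e: "Suc (Suc m) = l + (Suc (Suc m) - l)" using l by simp
  have "csum C (Mo m) (Mo (Suc m)) (\<lambda>i. csgn C i (dg m i)) (l + (Suc (Suc m) - l)) =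
    Add C (Ls m l) (Us m l)"
    unfolding Ls_def Us_def by (rule csum_split) (use l in \<open>auto intro: csgn_in\<close>)
  then show ?thesis unfolding dop_eq using e by simp
qed

lemma csgn_pair: "x \<in> Hom C X Y \<Longrightarrow> Add C (csgn C k x) (csgn C (Suc k) x) = Zer C X Y"
  by (simp add: csgn_Suc add_neg csgn_in)

lemma bd_mid:
  assumes k: "k < Suc m"
  shows "Cmp C (fc (Suc (Suc m)) (Suc k)) (dd (Suc m)) =
    Add C (Cmp C (Ls m k) (fc (Suc m) k)) (Neg C (Cmp C (Us m (Suc k)) (fc (Suc m) (Suc k))))"
proof -
  let ?n = "Suc m"
  let ?X = "Mo ?n" and ?Y = "Mo (Suc ?n)"
  let ?D = "fc (Suc ?n) (Suc k)"
  define f where "f j = csgn C j (dg ?n j)" for j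
  have fin: "\<And>j. j < Suc (Suc ?n) \<Longrightarrow> f j \<in> Hom C ?X ?Y" unfolding f_def by (auto intro: csgn_in)
  have Din: "?D \<in> Hom C ?Y ?X" using k by simp
  have e: "Suc (Suc ?n) = k + (2 + (?n - k))" using k by arith
  have s1: "dd ?n = Add C (csum C ?X ?Y f k) (csum C ?X ?Y (\<lambda>j. f (k + j)) (2 + (?n - k)))"
  proof -
    have "csum C ?X ?Y f (k + (2 + (?n - k))) = Add C (csum C ?X ?Y f k) (csum C ?X ?Y (\<lambda>j. f (k + j)) (2 + (?n - k)))"
      by (rule csum_split) (use fin k in auto)
    moreover have "dd ?n = csum C ?X ?Y f (k + (2 + (?n - k)))"
      unfolding dop_eq f_def[symmetric] by (rule arg_cong[where f="csum C ?X ?Y f"], rule e)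
    ultimately show ?thesis by simp
  qed
  have s2: "csum C ?X ?Y (\<lambda>j. f (k + j)) (2 + (?n - k)) =
      Add C (csum C ?X ?Y (\<lambda>j. f (k + j)) 2) (csum C ?X ?Y (\<lambda>j. f (k + (2 + j))) (?n - k))"
    by (rule csum_split) (use fin k in auto)
  have A: "csum C ?X ?Y f k \<in> Hom C ?X ?Y" using fin k by (intro csum_in) auto
  have B: "csum C ?X ?Y (\<lambda>j. f (k + j)) 2 \<in> Hom C ?X ?Y" using fin k by (intro csum_in) auto
  have Cc: "csum C ?X ?Y (\<lambda>j. f (k + (2 + j))) (?n - k) \<in> Hom C ?X ?Y" using fin k by (intro csum_in) auto
  have p1: "Cmp C ?D (csum C ?X ?Y f k) = Cmp C (Ls m k) (fc ?n k)"
  proof -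
    have "Cmp C ?D (csum C ?X ?Y f k) = csum C ?X ?X (\<lambda>j. Cmp C ?D (f j)) k"
      using fin k Din by (intro csum_cmp_r) auto
    also have "\<dots> = csum C ?X ?X (\<lambda>j. Cmp C (csgn C j (dg m j)) (fc ?n k)) k"
    proof (rule csum_cong)
      fix j assume j: "j < k"
      have "Cmp C ?D (f j) = csgn C j (Cmp C ?D (dg ?n j))"
        unfolding f_def using j k by (intro csgn_cmp_r[of _ ?X ?Y _ ?X]) auto
      also have "Cmp C ?D (dg ?n j) = Cmp C (dg m j) (fc ?n k)"
        using FS_gt[of j "Suc k" m] j k by simp
      also have "csgn C j \<dots> = Cmp C (csgn C j (dg m j)) (fc ?n k)"
        using j k by (intro csgn_cmp_l[symmetric, of _ ?X "Mo m" _ ?X]) auto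
      finally show "Cmp C ?D (f j) = Cmp C (csgn C j (dg m j)) (fc ?n k)" .
    qed
    also have "\<dots> = Cmp C (Ls m k) (fc ?n k)"
      unfolding Ls_def using k by (intro csum_cmp_l[symmetric]) (auto intro: csgn_in)
    finally show ?thesis .
  qed
  have p2: "Cmp C ?D (csum C ?X ?Y (\<lambda>j. f (k + j)) 2) = Zer C ?X ?X"
  proof -
    have "csum C ?X ?Y (\<lambda>j. f (k + j)) 2 = Add C (f k) (f (Suc k))"
      using csum_two[of "\<lambda>j. f (k + j)" ?X ?Y] fin k by (simp add: numeral_2_eq_2)
    then have "Cmp C ?D (csum C ?X ?Y (\<lambda>j. f (k + j)) 2) = Add C (Cmp C ?D (f k)) (Cmp C ?D (f (Suc k)))"
      using distr[of "f k" ?X ?Y "f (Suc k)" ?D ?X] fin k Din by simp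
    also have "Cmp C ?D (f k) = csgn C k (II ?n)"
      unfolding f_def using k FS_id[of "Suc k" k ?n] by (simp add: csgn_cmp_r[of _ ?X ?Y _ ?X])
    also have "Cmp C ?D (f (Suc k)) = csgn C (Suc k) (II ?n)"
      unfolding f_def using k FS_id[of "Suc k" "Suc k" ?n] by (simp add: csgn_cmp_r[of _ ?X ?Y _ ?X])
    finally show ?thesis using csgn_pair[of "II ?n" ?X ?X k] by simp
  qed
  have p3: "Cmp C ?D (csum C ?X ?Y (\<lambda>j. f (k + (2 + j))) (?n - k)) = Neg C (Cmp C (Us m (Suc k)) (fc ?n (Suc k)))"
  proof -
    have "Cmp C ?D (csum C ?X ?Y (\<lambda>j. f (k + (2 + j))) (?n - k)) = csum C ?X ?X (\<lambda>j. Cmp C ?D (f (k + (2 + j)))) (?n - k)"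
      using fin k Din by (intro csum_cmp_r) auto
    also have "\<dots> = csum C ?X ?X (\<lambda>j. Neg C (Cmp C (csgn C (Suc k + j) (dg m (Suc k + j))) (fc ?n (Suc k)))) (?n - k)"
    proof (rule csum_cong)
      fix j assume j: "j < ?n - k"
      have "Cmp C ?D (f (k + (2 + j))) = csgn C (k + (2 + j)) (Cmp C ?D (dg ?n (k + (2 + j))))"
        unfolding f_def using j k by (intro csgn_cmp_r[of _ ?X ?Y _ ?X]) auto
      also have "Cmp C ?D (dg ?n (k + (2 + j))) = Cmp C (dg m (Suc k + j)) (fc ?n (Suc k))"
        using FS_lt[of "Suc k" "k + (2 + j)" m] j k by simp
      also have "csgn C (k + (2 + j)) \<dots> = Neg C (csgn C (Suc k + j) (Cmp C (dg m (Suc k + j)) (fc ?n (Suc k))))"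
        using j k csgn_Suc[of "Cmp C (dg m (Suc k + j)) (fc ?n (Suc k))" ?X ?X "Suc k + j"]
        by (simp add: cmp_in[of _ ?X "Mo m"])
      also have "csgn C (Suc k + j) (Cmp C (dg m (Suc k + j)) (fc ?n (Suc k))) =
          Cmp C (csgn C (Suc k + j) (dg m (Suc k + j))) (fc ?n (Suc k))"
        using j k by (intro csgn_cmp_l[symmetric, of _ ?X "Mo m" _ ?X]) auto
      finally show "Cmp C ?D (f (k + (2 + j))) = Neg C (Cmp C (csgn C (Suc k + j) (dg m (Suc k + j))) (fc ?n (Suc k)))" .
    qed
    also have "\<dots> = Neg C (csum C ?X ?X (\<lambda>j. Cmp C (csgn C (Suc k + j) (dg m (Suc k + j))) (fc ?n (Suc k))) (?n - k))"
      using k by (intro csum_neg) (auto intro!: cmp_in[of _ ?X "Mo m"] csgn_in)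
    also have "csum C ?X ?X (\<lambda>j. Cmp C (csgn C (Suc k + j) (dg m (Suc k + j))) (fc ?n (Suc k))) (?n - k) =
        Cmp C (Us m (Suc k)) (fc ?n (Suc k))"
      unfolding Us_def using k by (subst csum_cmp_l) (auto intro: csgn_in)
    finally show ?thesis .
  qed
  have "Cmp C ?D (dd ?n) = Add C (Cmp C ?D (csum C ?X ?Y f k))
      (Add C (Cmp C ?D (csum C ?X ?Y (\<lambda>j. f (k + j)) 2)) (Cmp C ?D (csum C ?X ?Y (\<lambda>j. f (k + (2 + j))) (?n - k))))"
    unfolding s1 s2 using distr[OF A add_in[OF B Cc] Din] distr[OF B Cc Din] by simp
  also have "\<dots> = Add C (Cmp C (Ls m k) (fc ?n k)) (Neg C (Cmp C (Us m (Suc k)) (fc ?n (Suc k))))"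
    unfolding p1 p2 p3 using zer_add[OF neg_in[OF cmp_in[OF _ Us_in]]] k by simp
  finally show ?thesis .
qed

end

context dup
begin

lemma grpA: "I \<in> Hom C X Y \<Longrightarrow> W \<in> Hom C X Y \<Longrightarrow> T \<in> Hom C X Y \<Longrightarrow> E \<in> Hom C X Y \<Longrightarrow>
  Add C I (Add C (Neg C W) (Neg C T)) = Add C (Add C I (Neg C (Add C T (Neg C E)))) (Neg C (Add C W E))"
proof -
  assume I: "I \<in> Hom C X Y" and W: "W \<in> Hom C X Y" and T: "T \<in> Hom C X Y" and E: "E \<in> Hom C X Y"
  have nT: "Neg C T \<in> Hom C X Y" and nW: "Neg C W \<in> Hom C X Y" and nE: "Neg C E \<in> Hom C X Y"
    using T W E neg_in by auto
  have "Add C (Add C I (Neg C (Add C T (Neg C E)))) (Neg C (Add C W E)) =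
      Add C (Add C I (Add C (Neg C T) E)) (Add C (Neg C W) (Neg C E))"
    using neg_add[OF T nE] neg_neg[OF E] neg_add[OF W E] by simp
  also have "\<dots> = Add C I (Add C (Add C (Neg C T) E) (Add C (Neg C W) (Neg C E)))"
    using add_assoc[OF I add_in[OF nT E] add_in[OF nW nE]] .
  also have "Add C (Add C (Neg C T) E) (Add C (Neg C W) (Neg C E)) = Add C (Neg C T) (Add C E (Add C (Neg C W) (Neg C E)))"
    using add_assoc[OF nT E add_in[OF nW nE]] .
  also have "Add C E (Add C (Neg C W) (Neg C E)) = Add C (Neg C W) (Add C E (Neg C E))"
    using add_left_comm[OF E nW nE] .
  also have "\<dots> = Neg C W" using add_neg[OF E] add_zer[OF nW] by simp
  also have "Add C (Neg C T) (Neg C W) = Add C (Neg C W) (Neg C T)" using add_comm[OF nT nW] .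
  finally show ?thesis ..
qed

lemma bd_first:
  "Cmp C (fc (Suc (Suc m)) 0) (dd (Suc m)) =
    Add C (Add C (II (Suc m)) (Neg C (kk (Suc m)))) (Neg C (Cmp C (Us m 0) (fc (Suc m) 0)))"
proof -
  let ?n = "Suc m"
  let ?X = "Mo ?n" and ?Y = "Mo (Suc ?n)"
  let ?D = "fc (Suc ?n) 0"
  define f where "f j = csgn C j (dg ?n j)" for j
  have fin: "\<And>j. j < Suc (Suc ?n) \<Longrightarrow> f j \<in> Hom C ?X ?Y" unfolding f_def by (auto intro: csgn_in)
  have Din: "?D \<in> Hom C ?Y ?X" by simp
  define W where "W = csum C ?X ?X (\<lambda>j. csgn C j (Cmp C (dg m j) (fc ?n 0))) ?n"
  have Win: "W \<in> Hom C ?X ?X" unfolding W_def by (rule csum_in) (auto intro!: csgn_in cmp_in[of _ _ "Mo m"])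
  have d: "dd ?n = Add C (f 0) (Add C (csum C ?X ?Y (\<lambda>j. f (Suc j)) ?n) (f (Suc ?n)))"
  proof -
    have "dd ?n = Add C (f 0) (csum C ?X ?Y (\<lambda>j. f (Suc j)) (Suc ?n))"
      unfolding dop_eq f_def[symmetric] by (rule csum_first) (use fin in auto)
    also have "csum C ?X ?Y (\<lambda>j. f (Suc j)) (Suc ?n) = Add C (csum C ?X ?Y (\<lambda>j. f (Suc j)) ?n) (f (Suc ?n))"
      by (rule csum_Suc) (use fin in auto)
    finally show ?thesis .
  qed
  have A: "csum C ?X ?Y (\<lambda>j. f (Suc j)) ?n \<in> Hom C ?X ?Y" by (rule csum_in) (use fin in auto)
  have q1: "Cmp C ?D (f 0) = II ?n" unfolding f_def using FS_id[of 0 0 ?n] by simp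
  have q2: "Cmp C ?D (csum C ?X ?Y (\<lambda>j. f (Suc j)) ?n) = Neg C W"
  proof -
    have "Cmp C ?D (csum C ?X ?Y (\<lambda>j. f (Suc j)) ?n) = csum C ?X ?X (\<lambda>j. Cmp C ?D (f (Suc j))) ?n"
      using fin Din by (intro csum_cmp_r) auto
    also have "\<dots> = csum C ?X ?X (\<lambda>j. Neg C (csgn C j (Cmp C (dg m j) (fc ?n 0)))) ?n"
    proof (rule csum_cong)
      fix j assume j: "j < ?n"
      have "Cmp C ?D (f (Suc j)) = csgn C (Suc j) (Cmp C ?D (dg ?n (Suc j)))"
        unfolding f_def using j by (intro csgn_cmp_r[of _ ?X ?Y _ ?X]) auto
      also have "Cmp C ?D (dg ?n (Suc j)) = Cmp C (dg m j) (fc ?n 0)"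
        using FS_lt[of 0 "Suc j" m] j by simp
      also have "csgn C (Suc j) \<dots> = Neg C (csgn C j (Cmp C (dg m j) (fc ?n 0)))"
        using j by (intro csgn_Suc[of _ ?X ?X]) (auto intro!: cmp_in[of _ _ "Mo m"])
      finally show "Cmp C ?D (f (Suc j)) = Neg C (csgn C j (Cmp C (dg m j) (fc ?n 0)))" .
    qed
    also have "\<dots> = Neg C W" unfolding W_def
      by (intro csum_neg) (auto intro!: csgn_in cmp_in[of _ _ "Mo m"])
    finally show ?thesis .
  qed
  have q3: "Cmp C ?D (f (Suc ?n)) = Neg C (csgn C ?n (tt ?n))"
    unfolding f_def using csgn_cmp_r[of "dg ?n (Suc ?n)" ?X ?Y ?D ?X "Suc ?n"] csgn_Suc[OF tt_in, of ?n ?n] by simp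
  have u: "Cmp C (Us m 0) (fc ?n 0) = Add C W (csgn C ?n (ee m))"
  proof -
    have "Cmp C (Us m 0) (fc ?n 0) = csum C ?X ?X (\<lambda>k. Cmp C (csgn C k (dg m k)) (fc ?n 0)) (Suc ?n)"
      unfolding Us_def by (simp, rule csum_cmp_l) (auto intro: csgn_in)
    also have "\<dots> = csum C ?X ?X (\<lambda>k. csgn C k (Cmp C (dg m k) (fc ?n 0))) (Suc ?n)"
      by (intro csum_cong csgn_cmp_l[of _ ?X "Mo m" _ ?X]) auto
    also have "\<dots> = Add C W (csgn C ?n (ee m))"
      unfolding W_def by (rule csum_Suc) (auto intro!: csgn_in cmp_in[of _ _ "Mo m"])
    finally show ?thesis .
  qed
  have kk: "kk ?n = Add C (csgn C ?n (tt ?n)) (Neg C (csgn C ?n (ee m)))"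
    unfolding kappa_Suc by (simp add: csgn_Add[of _ ?X ?X] neg_in csgn_neg[of _ ?X ?X])
  have "Cmp C ?D (dd ?n) = Add C (II ?n) (Add C (Neg C W) (Neg C (csgn C ?n (tt ?n))))"
    unfolding d using distr[OF fin[of 0] add_in[OF A fin[of "Suc ?n"]] Din] distr[OF A fin[of "Suc ?n"] Din] q1 q2 q3
    by simp
  also have "\<dots> = Add C (Add C (II ?n) (Neg C (Add C (csgn C ?n (tt ?n)) (Neg C (csgn C ?n (ee m)))))) (Neg C (Add C W (csgn C ?n (ee m))))"
    by (rule grpA) (auto intro!: Win csgn_in)
  finally show ?thesis unfolding u kk .
qed

lemma bd_last:
  "Cmp C (fc (Suc (Suc m)) (Suc (Suc m))) (dd (Suc m)) = Cmp C (Ls m (Suc m)) (fc (Suc m) (Suc m))"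
proof -
  let ?n = "Suc m"
  let ?X = "Mo ?n" and ?Y = "Mo (Suc ?n)"
  let ?D = "fc (Suc ?n) (Suc ?n)"
  define f where "f j = csgn C j (dg ?n j)" for j
  have fin: "\<And>j. j < Suc (Suc ?n) \<Longrightarrow> f j \<in> Hom C ?X ?Y" unfolding f_def by (auto intro: csgn_in)
  have Din: "?D \<in> Hom C ?Y ?X" by simp
  have d: "dd ?n = Add C (csum C ?X ?Y f ?n) (Add C (f ?n) (f (Suc ?n)))"
  proof -
    have "csum C ?X ?Y f (?n + 2) = Add C (csum C ?X ?Y f ?n) (csum C ?X ?Y (\<lambda>j. f (?n + j)) 2)"
      by (rule csum_split) (use fin in auto)
    moreover have "csum C ?X ?Y (\<lambda>j. f (?n + j)) 2 = Add C (f ?n) (f (Suc ?n))"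
      using csum_two[of "\<lambda>j. f (?n + j)" ?X ?Y] fin by (simp add: numeral_2_eq_2)
    moreover have "dd ?n = csum C ?X ?Y f (?n + 2)" unfolding dop_eq f_def by simp
    ultimately show ?thesis by simp
  qed
  have A: "csum C ?X ?Y f ?n \<in> Hom C ?X ?Y" by (rule csum_in) (use fin in auto)
  have q1: "Cmp C ?D (csum C ?X ?Y f ?n) = Cmp C (Ls m ?n) (fc ?n ?n)"
  proof -
    have "Cmp C ?D (csum C ?X ?Y f ?n) = csum C ?X ?X (\<lambda>j. Cmp C ?D (f j)) ?n"
      using fin Din by (intro csum_cmp_r) auto
    also have "\<dots> = csum C ?X ?X (\<lambda>j. Cmp C (csgn C j (dg m j)) (fc ?n ?n)) ?n"
    proof (rule csum_cong)
      fix j assume j: "j < ?n"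
      have "Cmp C ?D (f j) = csgn C j (Cmp C ?D (dg ?n j))"
        unfolding f_def using j by (intro csgn_cmp_r[of _ ?X ?Y _ ?X]) auto
      also have "Cmp C ?D (dg ?n j) = Cmp C (dg m j) (fc ?n ?n)"
        using FS_gt[of j "Suc ?n" m] j by simp
      also have "csgn C j \<dots> = Cmp C (csgn C j (dg m j)) (fc ?n ?n)"
        using j by (intro csgn_cmp_l[symmetric, of _ ?X "Mo m" _ ?X]) auto
      finally show "Cmp C ?D (f j) = Cmp C (csgn C j (dg m j)) (fc ?n ?n)" .
    qed
    also have "\<dots> = Cmp C (Ls m ?n) (fc ?n ?n)"
      unfolding Ls_def by (intro csum_cmp_l[symmetric]) (auto intro: csgn_in)
    finally show ?thesis .
  qed
  have q2: "Add C (Cmp C ?D (f ?n)) (Cmp C ?D (f (Suc ?n))) = Zer C ?X ?X"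
  proof -
    have "Cmp C ?D (f ?n) = csgn C ?n (II ?n)"
      unfolding f_def using FS_id[of "Suc ?n" ?n ?n] by (simp add: csgn_cmp_r[of _ ?X ?Y _ ?X])
    moreover have "Cmp C ?D (f (Suc ?n)) = csgn C (Suc ?n) (II ?n)"
      unfolding f_def using FS_top[of ?n] by (simp add: csgn_cmp_r[of _ ?X ?Y _ ?X])
    ultimately show ?thesis using csgn_pair[of "II ?n" ?X ?X ?n] by simp
  qed
  have "Cmp C ?D (dd ?n) = Add C (Cmp C ?D (csum C ?X ?Y f ?n)) (Add C (Cmp C ?D (f ?n)) (Cmp C ?D (f (Suc ?n))))"
    unfolding d using distr[OF A add_in[OF fin[of ?n] fin[of "Suc ?n"]] Din] distr[OF fin[of ?n] fin[of "Suc ?n"] Din]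
    by simp
  also have "\<dots> = Cmp C (Ls m ?n) (fc ?n ?n)"
    unfolding q1 q2 by (rule add_zer) (auto intro!: cmp_in[of _ _ "Mo m"])
  finally show ?thesis .
qed

end

context dup
begin

lemma bd_suc: "Add C (Cmp C (bb (Suc (Suc m))) (dd (Suc m))) (Cmp C (dd m) (bb (Suc m))) =
   Add C (II (Suc m)) (Neg C (kk (Suc m)))"
proof -
  let ?n = "Suc m"
  let ?X = "Mo ?n"
  define P where "P l = csgn C l (Cmp C (Ls m l) (fc ?n l))" for l
  define Q where "Q l = csgn C l (Cmp C (Us m l) (fc ?n l))" for l
  define A where "A = Add C (II ?n) (Neg C (kk ?n))"
  define e where "e i = (if i = 0 then A else Zer C ?X ?X)" for i :: nat
  define p' where "p' i = (if i = 0 then Zer C ?X ?X else P (i - 1))" for i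
  define q' where "q' i = (if i \<le> ?n then Q i else Zer C ?X ?X)" for i
  define E where "E i = csgn C i (Cmp C (fc (Suc ?n) i) (dd ?n))" for i
  have Pin: "\<And>l. l \<le> ?n \<Longrightarrow> P l \<in> Hom C ?X ?X"
    unfolding P_def by (auto intro!: csgn_in cmp_in[of _ _ "Mo m"])
  have Qin: "\<And>l. l \<le> ?n \<Longrightarrow> Q l \<in> Hom C ?X ?X"
    unfolding Q_def by (auto intro!: csgn_in cmp_in[of _ _ "Mo m"])
  have Ain: "A \<in> Hom C ?X ?X" unfolding A_def by (auto intro!: add_in neg_in)
  have Z: "Zer C ?X ?X \<in> Hom C ?X ?X" by (simp add: zer_in)
  have ein: "\<And>i. e i \<in> Hom C ?X ?X" unfolding e_def using Ain Z by auto
  have pin: "\<And>i. i < Suc (Suc ?n) \<Longrightarrow> p' i \<in> Hom C ?X ?X" unfolding p'_def using Pin Z by auto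
  have qin: "\<And>i. q' i \<in> Hom C ?X ?X" unfolding q'_def using Qin Z by auto
  have Eeq: "E i = Add C (e i) (Neg C (Add C (p' i) (q' i)))" if i: "i < Suc (Suc ?n)" for i
  proof (cases i)
    case 0
    have "Q 0 = Cmp C (Us m 0) (fc ?n 0)" unfolding Q_def by simp
    then show ?thesis unfolding E_def e_def p'_def q'_def A_def using 0 bd_first[of m] zer_add[OF Qin[of 0]]
      by simp
  next
    case (Suc k)
    show ?thesis
    proof (cases "k < ?n")
      case True
      have m1: "Cmp C (Ls m k) (fc ?n k) \<in> Hom C ?X ?X" using True by (auto intro!: cmp_in[of _ _ "Mo m"])
      have m2: "Cmp C (Us m (Suc k)) (fc ?n (Suc k)) \<in> Hom C ?X ?X" using True by (auto intro!: cmp_in[of _ _ "Mo m"])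
      have "E i = csgn C (Suc k) (Add C (Cmp C (Ls m k) (fc ?n k)) (Neg C (Cmp C (Us m (Suc k)) (fc ?n (Suc k)))))"
        unfolding E_def Suc using bd_mid[OF True] by simp
      also have "\<dots> = Add C (Neg C (P k)) (Neg C (Q (Suc k)))"
        unfolding P_def Q_def using m1 m2
        by (simp add: csgn_Add[OF m1 neg_in[OF m2]] csgn_neg[OF m2] csgn_Suc[OF m1] csgn_Suc[OF m2] neg_in csgn_in neg_neg)
      also have "\<dots> = Add C (e i) (Neg C (Add C (p' i) (q' i)))"
        unfolding e_def p'_def q'_def using Suc True zer_add neg_add[OF Pin[of k] Qin[of "Suc k"]]
          zer_add[OF neg_in[OF add_in[OF Pin[of k] Qin[of "Suc k"]]]] by simp
      finally show ?thesis .
    next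
      case False
      then have k: "k = ?n" using i Suc by simp
      have m1: "Cmp C (Ls m ?n) (fc ?n ?n) \<in> Hom C ?X ?X" by (auto intro!: cmp_in[of _ _ "Mo m"])
      have "E i = csgn C (Suc ?n) (Cmp C (Ls m ?n) (fc ?n ?n))"
        unfolding E_def Suc k using bd_last[of m] by simp
      also have "\<dots> = Neg C (P ?n)" unfolding P_def using csgn_Suc[OF m1] by simp
      also have "\<dots> = Add C (e i) (Neg C (Add C (p' i) (q' i)))"
        unfolding e_def p'_def q'_def using Suc k add_zer[OF Pin[of ?n]] zer_add[OF neg_in[OF Pin[of ?n]]] by simp
      finally show ?thesis .
    qed
  qed
  have bd: "Cmp C (bb (Suc ?n)) (dd ?n) = csum C ?X ?X E (Suc (Suc ?n))"
  proof -
    have "Cmp C (bb (Suc ?n)) (dd ?n) = csum C ?X ?X (\<lambda>i. Cmp C (csgn C i (fc (Suc ?n) i)) (dd ?n)) (Suc (Suc ?n))"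
      unfolding bop_Suc[of ?n] by (rule csum_cmp_l) (auto intro: csgn_in)
    also have "\<dots> = csum C ?X ?X E (Suc (Suc ?n))"
      unfolding E_def by (intro csum_cong csgn_cmp_l[of _ ?X "Mo (Suc ?n)" _ ?X]) auto
    finally show ?thesis .
  qed
  have "csum C ?X ?X E (Suc (Suc ?n)) = csum C ?X ?X (\<lambda>i. Add C (e i) (Neg C (Add C (p' i) (q' i)))) (Suc (Suc ?n))"
    using Eeq by (intro csum_cong) auto
  also have "\<dots> = Add C (csum C ?X ?X e (Suc (Suc ?n))) (csum C ?X ?X (\<lambda>i. Neg C (Add C (p' i) (q' i))) (Suc (Suc ?n)))"
    using ein pin qin by (intro csum_add) (auto intro!: neg_in add_in)
  also have "csum C ?X ?X (\<lambda>i. Neg C (Add C (p' i) (q' i))) (Suc (Suc ?n)) =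
      Neg C (csum C ?X ?X (\<lambda>i. Add C (p' i) (q' i)) (Suc (Suc ?n)))"
    using pin qin by (intro csum_neg) (auto intro!: add_in)
  also have "csum C ?X ?X (\<lambda>i. Add C (p' i) (q' i)) (Suc (Suc ?n)) =
      Add C (csum C ?X ?X p' (Suc (Suc ?n))) (csum C ?X ?X q' (Suc (Suc ?n)))"
    using pin qin by (intro csum_add) auto
  also have "csum C ?X ?X e (Suc (Suc ?n)) = A"
  proof -
    have "csum C ?X ?X e (Suc (Suc ?n)) = Add C (e 0) (csum C ?X ?X (\<lambda>i. e (Suc i)) (Suc ?n))"
      using ein by (intro csum_first) auto
    also have "csum C ?X ?X (\<lambda>i. e (Suc i)) (Suc ?n) = Zer C ?X ?X"
      unfolding e_def by (intro csum_zero) auto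
    finally show ?thesis unfolding e_def using add_zer[OF Ain] by simp
  qed
  also have "csum C ?X ?X p' (Suc (Suc ?n)) = csum C ?X ?X P (Suc ?n)"
  proof -
    have "csum C ?X ?X p' (Suc (Suc ?n)) = Add C (p' 0) (csum C ?X ?X (\<lambda>i. p' (Suc i)) (Suc ?n))"
      using pin by (intro csum_first) auto
    also have "csum C ?X ?X (\<lambda>i. p' (Suc i)) (Suc ?n) = csum C ?X ?X P (Suc ?n)"
      unfolding p'_def by (intro csum_cong) auto
    finally show ?thesis unfolding p'_def using zer_add[OF csum_in[of ?X ?X "Suc ?n" P]] Pin by simp
  qed
  also have "csum C ?X ?X q' (Suc (Suc ?n)) = csum C ?X ?X Q (Suc ?n)"
  proof -
    have "csum C ?X ?X q' (Suc (Suc ?n)) = Add C (csum C ?X ?X q' (Suc ?n)) (q' (Suc ?n))"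
      using qin by (intro csum_Suc) auto
    also have "csum C ?X ?X q' (Suc ?n) = csum C ?X ?X Q (Suc ?n)"
      unfolding q'_def by (intro csum_cong) auto
    finally show ?thesis unfolding q'_def using add_zer[OF csum_in[of ?X ?X "Suc ?n" Q]] Qin by simp
  qed
  finally have bd2: "Cmp C (bb (Suc ?n)) (dd ?n) = Add C A (Neg C (Add C (csum C ?X ?X P (Suc ?n)) (csum C ?X ?X Q (Suc ?n))))"
    using bd by simp
  have db: "Cmp C (dd m) (bb ?n) = Add C (csum C ?X ?X P (Suc ?n)) (csum C ?X ?X Q (Suc ?n))"
  proof -
    have "Cmp C (dd m) (bb ?n) = csum C ?X ?X (\<lambda>l. Cmp C (dd m) (csgn C l (fc ?n l))) (Suc ?n)"
      unfolding bop_Suc[of m] by (rule csum_cmp_r) (auto intro: csgn_in)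
    also have "\<dots> = csum C ?X ?X (\<lambda>l. Add C (P l) (Q l)) (Suc ?n)"
    proof (rule csum_cong)
      fix l assume l: "l < Suc ?n"
      have "Cmp C (dd m) (csgn C l (fc ?n l)) = csgn C l (Cmp C (dd m) (fc ?n l))"
        using l by (intro csgn_cmp_r[of _ ?X "Mo m" _ ?X]) auto
      also have "Cmp C (dd m) (fc ?n l) = Add C (Cmp C (Ls m l) (fc ?n l)) (Cmp C (Us m l) (fc ?n l))"
        using LU[of l m] l distl[of "fc ?n l" ?X "Mo m" "Ls m l" ?X "Us m l"] by simp
      also have "csgn C l \<dots> = Add C (P l) (Q l)"
        unfolding P_def Q_def using l by (intro csgn_Add[of _ ?X ?X]) (auto intro!: cmp_in[of _ _ "Mo m"])
      finally show "Cmp C (dd m) (csgn C l (fc ?n l)) = Add C (P l) (Q l)" .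
    qed
    also have "\<dots> = Add C (csum C ?X ?X P (Suc ?n)) (csum C ?X ?X Q (Suc ?n))"
      using Pin Qin by (intro csum_add) auto
    finally show ?thesis .
  qed
  have S: "Add C (csum C ?X ?X P (Suc ?n)) (csum C ?X ?X Q (Suc ?n)) \<in> Hom C ?X ?X"
    using Pin Qin by (intro add_in csum_in) auto
  show ?thesis unfolding bd2 db A_def[symmetric]
    using add_assoc[OF Ain neg_in[OF S] S] neg_add_l[OF S] add_zer[OF Ain] by simp
qed

end

context dup
begin

lemma neg_sub: "a \<in> Hom C X Y \<Longrightarrow> b \<in> Hom C X Y \<Longrightarrow> Neg C (Add C a (Neg C b)) = Add C b (Neg C a)"
  using neg_add[of a X Y "Neg C b"] neg_neg[of b X Y] add_comm[of "Neg C a" X Y b] neg_in by simp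

lemma t1: "Cmp C (fc (Suc n) 0) (tt (Suc n)) = Cmp C (tt n) (fc (Suc n) 1)"
proof -
  let ?d0 = "fc (Suc n) 0" and ?F0 = "fc (Suc (Suc n)) 0" and ?F1 = "fc (Suc (Suc n)) 1"
    and ?S = "dg (Suc n) (Suc (Suc n))"
  have m: "?d0 \<in> Hom C (Mo (Suc n)) (Mo n)" "?F0 \<in> Hom C (Mo (Suc (Suc n))) (Mo (Suc n))"
    "?F1 \<in> Hom C (Mo (Suc (Suc n))) (Mo (Suc n))" "?S \<in> Hom C (Mo (Suc n)) (Mo (Suc (Suc n)))"
    "dg n (Suc n) \<in> Hom C (Mo n) (Mo (Suc n))" "fc (Suc n) 1 \<in> Hom C (Mo (Suc n)) (Mo n)" by auto
  have "Cmp C ?d0 (Cmp C ?F0 ?S) = Cmp C (Cmp C ?d0 ?F0) ?S" using assoc[OF m(4) m(2) m(1)] .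
  also have "Cmp C ?d0 ?F0 = Cmp C ?d0 ?F1" using DD[of 0 1 n] by simp
  also have "Cmp C (Cmp C ?d0 ?F1) ?S = Cmp C ?d0 (Cmp C ?F1 ?S)" using assoc[OF m(4) m(3) m(1)] by simp
  also have "Cmp C ?F1 ?S = Cmp C (dg n (Suc n)) (fc (Suc n) 1)" using FS_lt[of 1 "Suc (Suc n)" n] by simp
  also have "Cmp C ?d0 (Cmp C (dg n (Suc n)) (fc (Suc n) 1)) = Cmp C (tt n) (fc (Suc n) 1)"
    using assoc[OF m(6) m(5) m(1)] .
  finally show ?thesis .
qed

lemma t2: "Cmp C (fc (Suc n) 0) (ee n) = Cmp C (tt n) (fc (Suc n) 0)"
proof -
  have m: "fc (Suc n) 0 \<in> Hom C (Mo (Suc n)) (Mo n)" "dg n (Suc n) \<in> Hom C (Mo n) (Mo (Suc n))" by auto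
  show ?thesis using assoc[OF m(1) m(2) m(1)] .
qed

lemma K0L: "Cmp C (fc (Suc n) 0) (kk (Suc n)) =
   csgn C n (Add C (Cmp C (tt n) (fc (Suc n) 0)) (Neg C (Cmp C (tt n) (fc (Suc n) 1))))"
proof -
  let ?X = "Mo (Suc n)" and ?Y = "Mo n"
  have m: "tt (Suc n) \<in> Hom C ?X ?X" "ee n \<in> Hom C ?X ?X" "fc (Suc n) 0 \<in> Hom C ?X ?Y" by auto
  have a: "Cmp C (tt n) (fc (Suc n) 0) \<in> Hom C ?X ?Y" "Cmp C (tt n) (fc (Suc n) 1) \<in> Hom C ?X ?Y"
    using cmp_in[OF face_in[of 0 n] tt_in[of n]] cmp_in[OF face_in[of 1 n] tt_in[of n]] by auto
  have "Cmp C (fc (Suc n) 0) (kk (Suc n)) = csgn C (Suc n) (Cmp C (fc (Suc n) 0) (Add C (tt (Suc n)) (Neg C (ee n))))"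
    unfolding kappa_Suc using m by (intro csgn_cmp_r[of _ ?X ?X _ ?Y]) (auto intro!: add_in neg_in)
  also have "Cmp C (fc (Suc n) 0) (Add C (tt (Suc n)) (Neg C (ee n))) =
      Add C (Cmp C (tt n) (fc (Suc n) 1)) (Neg C (Cmp C (tt n) (fc (Suc n) 0)))"
    using cmp_sub_r[OF m(1) m(2) m(3)] t1 t2 by simp
  also have "csgn C (Suc n) \<dots> = csgn C n (Add C (Cmp C (tt n) (fc (Suc n) 0)) (Neg C (Cmp C (tt n) (fc (Suc n) 1))))"
    using csgn_Suc[OF add_in[OF a(2) neg_in[OF a(1)]], of n] csgn_neg[OF add_in[OF a(2) neg_in[OF a(1)]], of n, symmetric]
      neg_sub[OF a(2) a(1)] by simp
  finally show ?thesis .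
qed

lemma K0R: "Cmp C (kk n) (Add C (fc (Suc n) 0) (Neg C (fc (Suc n) 1))) =
   csgn C n (Add C (Cmp C (tt n) (fc (Suc n) 0)) (Neg C (Cmp C (tt n) (fc (Suc n) 1))))"
proof (cases n)
  case 0
  then show ?thesis using kappa_0 cmp_sub_r[of "fc 1 0" "Mo 1" "Mo 0" "fc 1 1" "tt 0" "Mo 0"] by simp
next
  case (Suc p)
  let ?X = "Mo (Suc n)" and ?Y = "Mo n"
  have m: "fc (Suc n) 0 \<in> Hom C ?X ?Y" "fc (Suc n) 1 \<in> Hom C ?X ?Y" "tt n \<in> Hom C ?Y ?Y" "ee p \<in> Hom C ?Y ?Y"
    using Suc by auto
  have a: "Cmp C (tt n) (fc (Suc n) 0) \<in> Hom C ?X ?Y" "Cmp C (tt n) (fc (Suc n) 1) \<in> Hom C ?X ?Y"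
    using cmp_in[OF face_in[of 0 n] tt_in[of n]] cmp_in[OF face_in[of 1 n] tt_in[of n]] by auto
  have e: "Cmp C (ee p) (fc (Suc n) 1) = Cmp C (ee p) (fc (Suc n) 0)"
  proof -
    have m2: "dg p n \<in> Hom C (Mo p) ?Y" "fc n 0 \<in> Hom C ?Y (Mo p)" using Suc by auto
    have "Cmp C (ee p) (fc (Suc n) 1) = Cmp C (dg p n) (Cmp C (fc n 0) (fc (Suc n) 1))"
      using assoc[OF m(2) m2(2) m2(1)] Suc by simp
    also have "Cmp C (fc n 0) (fc (Suc n) 1) = Cmp C (fc n 0) (fc (Suc n) 0)"
      using DD[of 0 1 p] Suc by simp
    also have "Cmp C (dg p n) \<dots> = Cmp C (ee p) (fc (Suc n) 0)"
      using assoc[OF m(1) m2(2) m2(1)] Suc by simp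
    finally show ?thesis .
  qed
  have ee0: "Cmp C (ee p) (fc (Suc n) 0) \<in> Hom C ?X ?Y" using cmp_in[OF m(1) m(4)] .
  have "Cmp C (kk n) (Add C (fc (Suc n) 0) (Neg C (fc (Suc n) 1))) =
      csgn C n (Cmp C (Add C (tt n) (Neg C (ee p))) (Add C (fc (Suc n) 0) (Neg C (fc (Suc n) 1))))"
    unfolding Suc kappa_Suc using m Suc by (intro csgn_cmp_l[of _ ?X ?Y _ ?Y]) (auto intro!: add_in neg_in)
  also have "Cmp C (Add C (tt n) (Neg C (ee p))) (Add C (fc (Suc n) 0) (Neg C (fc (Suc n) 1))) =
      Add C (Cmp C (tt n) (fc (Suc n) 0)) (Neg C (Cmp C (tt n) (fc (Suc n) 1)))"
    unfolding cmp_sub_sub[OF m(1) m(2) m(3) m(4)] e using add_neg[OF ee0] neg_zer[of ?X ?Y]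
      add_zer[OF add_in[OF a(1) neg_in[OF a(2)]]] by simp
  finally show ?thesis using Suc by simp
qed

lemma Ki:
  assumes i: "1 \<le> i" "i \<le> n"
  shows "Cmp C (fc (Suc n) i) (kk (Suc n)) = Neg C (Cmp C (kk n) (fc (Suc n) (Suc i)))"
proof -
  obtain p where p: "n = Suc p" using i by (cases n) auto
  let ?X = "Mo (Suc n)" and ?Y = "Mo n"
  let ?di = "fc (Suc n) i" and ?F0 = "fc (Suc (Suc n)) 0" and ?Fi = "fc (Suc (Suc n)) (Suc i)"
    and ?S = "dg (Suc n) (Suc (Suc n))" and ?d0 = "fc (Suc n) 0" and ?dj = "fc (Suc n) (Suc i)"
  have m: "?di \<in> Hom C ?X ?Y" "?F0 \<in> Hom C (Mo (Suc (Suc n))) ?X" "?Fi \<in> Hom C (Mo (Suc (Suc n))) ?X"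
    "?S \<in> Hom C ?X (Mo (Suc (Suc n)))" "?d0 \<in> Hom C ?X ?Y" "?dj \<in> Hom C ?X ?Y"
    "dg n (Suc n) \<in> Hom C ?Y ?X" "tt n \<in> Hom C ?Y ?Y" "ee p \<in> Hom C ?Y ?Y"
    "tt (Suc n) \<in> Hom C ?X ?X" "ee n \<in> Hom C ?X ?X" using i p by auto
  have a1: "Cmp C ?di (tt (Suc n)) = Cmp C (tt n) ?dj"
  proof -
    have "Cmp C ?di (Cmp C ?F0 ?S) = Cmp C (Cmp C ?di ?F0) ?S" using assoc[OF m(4) m(2) m(1)] .
    also have "Cmp C ?di ?F0 = Cmp C ?d0 ?Fi" using DD[of 0 "Suc i" n] i by simp
    also have "Cmp C (Cmp C ?d0 ?Fi) ?S = Cmp C ?d0 (Cmp C ?Fi ?S)" using assoc[OF m(4) m(3) m(5)] by simp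
    also have "Cmp C ?Fi ?S = Cmp C (dg n (Suc n)) ?dj" using FS_lt[of "Suc i" "Suc (Suc n)" n] i by simp
    also have "Cmp C ?d0 (Cmp C (dg n (Suc n)) ?dj) = Cmp C (tt n) ?dj" using assoc[OF m(6) m(7) m(5)] .
    finally show ?thesis .
  qed
  have a2: "Cmp C ?di (ee n) = Cmp C (ee p) ?dj"
  proof -
    have m2: "dg p n \<in> Hom C (Mo p) ?Y" "fc n 0 \<in> Hom C ?Y (Mo p)" "fc n i \<in> Hom C ?Y (Mo p)"
      using p i by auto
    have "Cmp C ?di (Cmp C (dg n (Suc n)) ?d0) = Cmp C (Cmp C ?di (dg n (Suc n))) ?d0"
      using assoc[OF m(5) m(7) m(1)] .
    also have "Cmp C ?di (dg n (Suc n)) = Cmp C (dg p n) (fc n i)"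
      using FS_lt[of i "Suc (Suc p)" p] i p by simp
    also have "Cmp C (Cmp C (dg p n) (fc n i)) ?d0 = Cmp C (dg p n) (Cmp C (fc n i) ?d0)"
      using assoc[OF m(5) m2(3) m2(1)] by simp
    also have "Cmp C (fc n i) ?d0 = Cmp C (fc n 0) ?dj" using DD[of 0 "Suc i" p] i p by simp
    also have "Cmp C (dg p n) (Cmp C (fc n 0) ?dj) = Cmp C (ee p) ?dj"
      using assoc[OF m(6) m2(2) m2(1)] p by simp
    finally show ?thesis .
  qed
  have "Cmp C ?di (kk (Suc n)) = csgn C (Suc n) (Cmp C ?di (Add C (tt (Suc n)) (Neg C (ee n))))"
    unfolding kappa_Suc using m by (intro csgn_cmp_r[of _ ?X ?X _ ?Y]) (auto intro!: add_in neg_in)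
  also have "Cmp C ?di (Add C (tt (Suc n)) (Neg C (ee n))) = Cmp C (Add C (tt n) (Neg C (ee p))) ?dj"
    using cmp_sub_r[OF m(10) m(11) m(1)] cmp_sub_l[OF m(6) m(8) m(9)] a1 a2 by simp
  also have "csgn C (Suc n) \<dots> = Neg C (Cmp C (csgn C n (Add C (tt n) (Neg C (ee p)))) ?dj)"
    using csgn_Suc[OF cmp_in[OF m(6) add_in[OF m(8) neg_in[OF m(9)]]], of n]
      csgn_cmp_l[OF m(6) add_in[OF m(8) neg_in[OF m(9)]], of n] by simp
  also have "csgn C n (Add C (tt n) (Neg C (ee p))) = kk n" unfolding p kappa_Suc ..
  finally show ?thesis .
qed

lemma Ktop: "Cmp C (fc (Suc n) (Suc n)) (kk (Suc n)) = Zer C (Mo (Suc n)) (Mo n)"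
proof -
  let ?X = "Mo (Suc n)" and ?Y = "Mo n"
  let ?dt = "fc (Suc n) (Suc n)" and ?F0 = "fc (Suc (Suc n)) 0" and ?Ft = "fc (Suc (Suc n)) (Suc (Suc n))"
    and ?S = "dg (Suc n) (Suc (Suc n))" and ?d0 = "fc (Suc n) 0"
  have m: "?dt \<in> Hom C ?X ?Y" "?F0 \<in> Hom C (Mo (Suc (Suc n))) ?X" "?Ft \<in> Hom C (Mo (Suc (Suc n))) ?X"
    "?S \<in> Hom C ?X (Mo (Suc (Suc n)))" "?d0 \<in> Hom C ?X ?Y"
    "dg n (Suc n) \<in> Hom C ?Y ?X" "tt (Suc n) \<in> Hom C ?X ?X" "ee n \<in> Hom C ?X ?X" by auto
  have a1: "Cmp C ?dt (tt (Suc n)) = ?d0"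
  proof -
    have "Cmp C ?dt (Cmp C ?F0 ?S) = Cmp C (Cmp C ?dt ?F0) ?S" using assoc[OF m(4) m(2) m(1)] .
    also have "Cmp C ?dt ?F0 = Cmp C ?d0 ?Ft" using DD[of 0 "Suc (Suc n)" n] by simp
    also have "Cmp C (Cmp C ?d0 ?Ft) ?S = Cmp C ?d0 (Cmp C ?Ft ?S)" using assoc[OF m(4) m(3) m(5)] by simp
    also have "Cmp C ?Ft ?S = II (Suc n)" using FS_top[of "Suc n"] by simp
    finally show ?thesis using idr[OF m(5)] by simp
  qed
  have a2: "Cmp C ?dt (ee n) = ?d0"
    using assoc[OF m(5) m(6) m(1)] FS_top[of n] idl[OF m(5)] by simp
  have "Cmp C ?dt (kk (Suc n)) = csgn C (Suc n) (Cmp C ?dt (Add C (tt (Suc n)) (Neg C (ee n))))"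
    unfolding kappa_Suc using m by (intro csgn_cmp_r[of _ ?X ?X _ ?Y]) (auto intro!: add_in neg_in)
  also have "Cmp C ?dt (Add C (tt (Suc n)) (Neg C (ee n))) = Zer C ?X ?Y"
    using cmp_sub_r[OF m(7) m(8) m(1)] a1 a2 add_neg[OF m(5)] by simp
  finally show ?thesis using csgn_zer[of ?X ?Y] by simp
qed

end

context dup
begin

definition As where "As n k = csum C (Mo (Suc n)) (Mo n) (\<lambda>i. csgn C i (fc (Suc n) i)) k"

lemma As_in[simp]: "k \<le> Suc (Suc n) \<Longrightarrow> As n k \<in> Hom C (Mo (Suc n)) (Mo n)"
  unfolding As_def by (rule csum_in) (auto intro: csgn_in)

lemma As_Suc: "k \<le> Suc n \<Longrightarrow> As n (Suc k) = Add C (As n k) (csgn C k (fc (Suc n) k))"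
  unfolding As_def by (rule csum_Suc) (auto intro: csgn_in)

lemma AK: "k \<le> n \<Longrightarrow> Cmp C (As n (Suc k)) (kk (Suc n)) = Cmp C (kk n) (As n (Suc (Suc k)))"
proof (induction k)
  case 0
  have a1: "As n (Suc 0) = fc (Suc n) 0"
    unfolding As_def using csum_one[of "\<lambda>i. csgn C i (fc (Suc n) i)" "Mo (Suc n)" "Mo n"] by simp
  have a2: "As n (Suc (Suc 0)) = Add C (fc (Suc n) 0) (Neg C (fc (Suc n) 1))"
    unfolding As_def using csum_two[of "\<lambda>i. csgn C i (fc (Suc n) i)" "Mo (Suc n)" "Mo n"]
    by (simp add: csgn_def neg_in)
  show ?case unfolding a1 a2 K0L K0R ..
next
  case (Suc k)
  let ?X = "Mo (Suc n)" and ?Y = "Mo n"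
  have k: "Suc k \<le> n" using Suc by simp
  have m: "As n (Suc k) \<in> Hom C ?X ?Y" "csgn C (Suc k) (fc (Suc n) (Suc k)) \<in> Hom C ?X ?Y"
    "kk (Suc n) \<in> Hom C ?X ?X" "kk n \<in> Hom C ?Y ?Y" "fc (Suc n) (Suc (Suc k)) \<in> Hom C ?X ?Y"
    "fc (Suc n) (Suc k) \<in> Hom C ?X ?Y" "As n (Suc (Suc k)) \<in> Hom C ?X ?Y"
    using k by (auto intro: csgn_in)
  have "Cmp C (As n (Suc (Suc k))) (kk (Suc n)) =
     Add C (Cmp C (As n (Suc k)) (kk (Suc n))) (Cmp C (csgn C (Suc k) (fc (Suc n) (Suc k))) (kk (Suc n)))"
    using As_Suc[of "Suc k" n] k distl[OF m(3) m(1) m(2)] by simp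
  also have "Cmp C (As n (Suc k)) (kk (Suc n)) = Cmp C (kk n) (As n (Suc (Suc k)))"
    using Suc k by simp
  also have "Cmp C (csgn C (Suc k) (fc (Suc n) (Suc k))) (kk (Suc n)) =
      Cmp C (kk n) (csgn C (Suc (Suc k)) (fc (Suc n) (Suc (Suc k))))"
  proof -
    have "Cmp C (csgn C (Suc k) (fc (Suc n) (Suc k))) (kk (Suc n)) = csgn C (Suc k) (Cmp C (fc (Suc n) (Suc k)) (kk (Suc n)))"
      using csgn_cmp_l[OF m(3) m(6)] .
    also have "\<dots> = csgn C (Suc k) (Neg C (Cmp C (kk n) (fc (Suc n) (Suc (Suc k)))))"
      using Ki[of "Suc k" n] k by simp
    also have "\<dots> = csgn C (Suc (Suc k)) (Cmp C (kk n) (fc (Suc n) (Suc (Suc k))))"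
      using csgn_neg[OF cmp_in[OF m(5) m(4)]] csgn_Suc[OF cmp_in[OF m(5) m(4)]] by simp
    also have "\<dots> = Cmp C (kk n) (csgn C (Suc (Suc k)) (fc (Suc n) (Suc (Suc k))))"
      using csgn_cmp_r[OF m(5) m(4)] by simp
    finally show ?thesis .
  qed
  also have "Add C (Cmp C (kk n) (As n (Suc (Suc k)))) (Cmp C (kk n) (csgn C (Suc (Suc k)) (fc (Suc n) (Suc (Suc k))))) =
     Cmp C (kk n) (As n (Suc (Suc (Suc k))))"
    using As_Suc[of "Suc (Suc k)" n] k distr[OF m(7) csgn_in[OF m(5)] m(4)] by simp
  finally show ?case .
qed

lemma bk: "Cmp C (bb (Suc n)) (kk (Suc n)) = Cmp C (kk n) (bb (Suc n))"
proof -
  let ?X = "Mo (Suc n)" and ?Y = "Mo n"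
  have b: "bb (Suc n) = As n (Suc (Suc n))" unfolding bop_Suc As_def ..
  have m: "As n (Suc n) \<in> Hom C ?X ?Y" "csgn C (Suc n) (fc (Suc n) (Suc n)) \<in> Hom C ?X ?Y"
    "kk (Suc n) \<in> Hom C ?X ?X" "fc (Suc n) (Suc n) \<in> Hom C ?X ?Y" by (auto intro: csgn_in)
  have "Cmp C (bb (Suc n)) (kk (Suc n)) =
     Add C (Cmp C (As n (Suc n)) (kk (Suc n))) (Cmp C (csgn C (Suc n) (fc (Suc n) (Suc n))) (kk (Suc n)))"
    unfolding b using As_Suc[of "Suc n" n] distl[OF m(3) m(1) m(2)] by simp
  also have "Cmp C (As n (Suc n)) (kk (Suc n)) = Cmp C (kk n) (bb (Suc n))"
    using AK[of n n] b by simp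
  also have "Cmp C (csgn C (Suc n) (fc (Suc n) (Suc n))) (kk (Suc n)) = Zer C ?X ?Y"
    using csgn_cmp_l[OF m(3) m(4)] Ktop[of n] csgn_zer[of ?X ?Y] by simp
  finally show ?thesis using add_zer[OF cmp_in[OF bop_in kappa_in]] by simp
qed

lemma inv_sub: "I \<in> Hom C X Y \<Longrightarrow> k \<in> Hom C X Y \<Longrightarrow> k = Add C I (Neg C (Add C I (Neg C k)))"
proof -
  assume I: "I \<in> Hom C X Y" and k: "k \<in> Hom C X Y"
  have "Add C I (Neg C (Add C I (Neg C k))) = Add C I (Add C k (Neg C I))" using neg_sub[OF I k] by simp
  also have "\<dots> = Add C k (Add C I (Neg C I))" using add_left_comm[OF I k neg_in[OF I]] .
  also have "\<dots> = k" using add_neg[OF I] add_zer[OF k] by simp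
  finally show ?thesis ..
qed

lemma kinv0: "kk 0 = Add C (II 0) (Neg C (Cmp C (bb 1) (dd 0)))"
  using inv_sub[of "II 0" "Mo 0" "Mo 0" "kk 0"] bd0 by simp

lemma kinv: "kk (Suc m) = Add C (II (Suc m)) (Neg C (Add C (Cmp C (bb (Suc (Suc m))) (dd (Suc m))) (Cmp C (dd m) (bb (Suc m)))))"
  using inv_sub[of "II (Suc m)" "Mo (Suc m)" "Mo (Suc m)" "kk (Suc m)"] bd_suc[of m] by simp

lemma kd: "Cmp C (kk (Suc n)) (dd n) = Cmp C (dd n) (kk n)"
proof -
  let ?X = "Mo n" and ?Y = "Mo (Suc n)"
  define X where "X = Cmp C (bb (Suc (Suc n))) (dd (Suc n))"
  define Y where "Y = Cmp C (dd n) (bb (Suc n))"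
  have d: "dd n \<in> Hom C ?X ?Y" by simp
  have XY: "X \<in> Hom C ?Y ?Y" "Y \<in> Hom C ?Y ?Y" unfolding X_def Y_def
    using cmp_in[OF dop_in[of "Suc n"] bop_in[of "Suc n"]] cmp_in[OF bop_in[of n] dop_in[of n]] by auto
  have Yd: "Cmp C Y (dd n) \<in> Hom C ?X ?Y" using cmp_in[OF d XY(2)] .
  have Xd: "Cmp C X (dd n) = Zer C ?X ?Y"
  proof -
    have "Cmp C X (dd n) = Cmp C (bb (Suc (Suc n))) (Cmp C (dd (Suc n)) (dd n))"
      unfolding X_def using assoc[OF d dop_in bop_in] by simp
    also have "\<dots> = Zer C ?X ?Y" using dd_sq[of n] cmp_zer_r[OF bop_in, of ?X] by simp
    finally show ?thesis .
  qed
  have L: "Cmp C (kk (Suc n)) (dd n) = Add C (dd n) (Neg C (Cmp C Y (dd n)))"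
  proof -
    have "Cmp C (kk (Suc n)) (dd n) = Cmp C (Add C (II (Suc n)) (Neg C (Add C X Y))) (dd n)"
      unfolding X_def Y_def using kinv[of n] by simp
    also have "\<dots> = Add C (dd n) (Neg C (Add C (Cmp C X (dd n)) (Cmp C Y (dd n))))"
      using cmp_sub_l[OF d II_in add_in[OF XY]] idl[OF d] distl[OF d XY] by simp
    finally show ?thesis using Xd zer_add[OF Yd] by simp
  qed
  have YdE: "Cmp C Y (dd n) = Cmp C (dd n) (Cmp C (bb (Suc n)) (dd n))"
    unfolding Y_def using assoc[OF d bop_in d] by simp
  show ?thesis
  proof (cases n)
    case 0
    have "Cmp C (dd n) (kk n) = Cmp C (dd n) (Add C (II n) (Neg C (Cmp C (bb (Suc n)) (dd n))))"
      using kinv0 0 by simp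
    also have "\<dots> = Add C (dd n) (Neg C (Cmp C (dd n) (Cmp C (bb (Suc n)) (dd n))))"
      using cmp_sub_r[OF II_in cmp_in[OF d bop_in] d] idr[OF d] by simp
    finally show ?thesis using L YdE by simp
  next
    case (Suc p)
    define X' where "X' = Cmp C (bb (Suc n)) (dd n)"
    define Y' where "Y' = Cmp C (dd p) (bb n)"
    have XY': "X' \<in> Hom C ?X ?X" "Y' \<in> Hom C ?X ?X" unfolding X'_def Y'_def
      using Suc cmp_in[OF dop_in[of n] bop_in[of n]] cmp_in[OF bop_in[of p] dop_in[of p]] by auto
    have dY': "Cmp C (dd n) Y' = Zer C ?X ?Y"
    proof -
      have bn: "bb n \<in> Hom C ?X (Mo p)" using Suc by simp
      have dp: "dd p \<in> Hom C (Mo p) ?X" using Suc by simp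
      have "Cmp C (dd n) Y' = Cmp C (Cmp C (dd n) (dd p)) (bb n)"
        unfolding Y'_def using assoc[OF bn dp d] by simp
      also have "\<dots> = Zer C ?X ?Y" using dd_sq[of p] Suc cmp_zer_l[OF bn, of ?Y] by simp
      finally show ?thesis .
    qed
    have dX': "Cmp C (dd n) X' \<in> Hom C ?X ?Y" using cmp_in[OF XY'(1) d] .
    have "Cmp C (dd n) (kk n) = Cmp C (dd n) (Add C (II n) (Neg C (Add C X' Y')))"
      unfolding X'_def Y'_def using kinv[of p] Suc by simp
    also have "\<dots> = Add C (dd n) (Neg C (Add C (Cmp C (dd n) X') (Cmp C (dd n) Y')))"
      using cmp_sub_r[OF II_in add_in[OF XY'] d] idr[OF d] distr[OF XY' d] by simp
    also have "\<dots> = Add C (dd n) (Neg C (Cmp C (dd n) X'))" using dY' add_zer[OF dX'] by simp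
    finally show ?thesis using L YdE X'_def by simp
  qed
qed

lemma KB: "Cmp C (KP n k) (bb (Suc n)) = Cmp C (bb (Suc n)) (KP (Suc n) k)"
proof (induction k)
  case 0 then show ?case using idl[OF bop_in] idr[OF bop_in] by simp
next
  case (Suc k)
  have "Cmp C (KP n (Suc k)) (bb (Suc n)) = Cmp C (kk n) (Cmp C (KP n k) (bb (Suc n)))"
    unfolding kpow_Suc using assoc[OF bop_in kpow_in kappa_in] by simp
  also have "\<dots> = Cmp C (Cmp C (kk n) (bb (Suc n))) (KP (Suc n) k)"
    using Suc assoc[OF kpow_in bop_in kappa_in] by simp
  also have "\<dots> = Cmp C (bb (Suc n)) (KP (Suc n) (Suc k))"
    unfolding kpow_Suc bk[symmetric] using assoc[OF kpow_in kappa_in bop_in] by simp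
  finally show ?case .
qed

lemma KD: "Cmp C (KP (Suc n) k) (dd n) = Cmp C (dd n) (KP n k)"
proof (induction k)
  case 0 then show ?case using idl[OF dop_in] idr[OF dop_in] by simp
next
  case (Suc k)
  have "Cmp C (KP (Suc n) (Suc k)) (dd n) = Cmp C (kk (Suc n)) (Cmp C (KP (Suc n) k) (dd n))"
    unfolding kpow_Suc using assoc[OF dop_in kpow_in kappa_in] by simp
  also have "\<dots> = Cmp C (Cmp C (kk (Suc n)) (dd n)) (KP n k)"
    using Suc assoc[OF kpow_in dop_in kappa_in] by simp
  also have "\<dots> = Cmp C (dd n) (KP n (Suc k))"
    unfolding kpow_Suc kd using assoc[OF kpow_in kappa_in dop_in] by simp
  finally show ?case .
qed

end

context dup
begin

abbreviation "PI \<equiv> piop C Mo Mf"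

lemma KS0: "Cmp C (kk (Suc n)) (dg n 0) = Zer C (Mo n) (Mo (Suc n))"
proof -
  let ?X = "Mo n" and ?Y = "Mo (Suc n)"
  have m: "dg n 0 \<in> Hom C ?X ?Y" "dg (Suc n) (Suc (Suc n)) \<in> Hom C ?Y (Mo (Suc (Suc n)))"
    "fc (Suc (Suc n)) 0 \<in> Hom C (Mo (Suc (Suc n))) ?Y" "dg n (Suc n) \<in> Hom C ?X ?Y"
    "fc (Suc n) 0 \<in> Hom C ?Y ?X" "dg (Suc n) 0 \<in> Hom C ?Y (Mo (Suc (Suc n)))"
    "tt (Suc n) \<in> Hom C ?Y ?Y" "ee n \<in> Hom C ?Y ?Y" by auto
  have a1: "Cmp C (tt (Suc n)) (dg n 0) = dg n (Suc n)"
  proof -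
    have "Cmp C (tt (Suc n)) (dg n 0) = Cmp C (fc (Suc (Suc n)) 0) (Cmp C (dg (Suc n) (Suc (Suc n))) (dg n 0))"
      using assoc[OF m(1) m(2) m(3)] by simp
    also have "Cmp C (dg (Suc n) (Suc (Suc n))) (dg n 0) = Cmp C (dg (Suc n) 0) (dg n (Suc n))"
      using SS[of 0 "Suc (Suc n)" n] by simp
    also have "Cmp C (fc (Suc (Suc n)) 0) (Cmp C (dg (Suc n) 0) (dg n (Suc n))) =
        Cmp C (Cmp C (fc (Suc (Suc n)) 0) (dg (Suc n) 0)) (dg n (Suc n))"
      using assoc[OF m(4) m(6) m(3)] .
    also have "Cmp C (fc (Suc (Suc n)) 0) (dg (Suc n) 0) = II (Suc n)" using FS_id[of 0 0 "Suc n"] by simp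
    finally show ?thesis using idl[OF m(4)] by simp
  qed
  have a2: "Cmp C (ee n) (dg n 0) = dg n (Suc n)"
    using assoc[OF m(1) m(5) m(4)] FS_id[of 0 0 n] idr[OF m(4)] by simp
  have "Cmp C (kk (Suc n)) (dg n 0) = csgn C (Suc n) (Cmp C (Add C (tt (Suc n)) (Neg C (ee n))) (dg n 0))"
    unfolding kappa_Suc using m by (intro csgn_cmp_l[of _ ?X ?Y _ ?Y]) (auto intro!: add_in neg_in)
  also have "Cmp C (Add C (tt (Suc n)) (Neg C (ee n))) (dg n 0) = Zer C ?X ?Y"
    using cmp_sub_l[OF m(1) m(7) m(8)] a1 a2 add_neg[OF m(4)] by simp
  finally show ?thesis using csgn_zer[of ?X ?Y] by simp
qed

lemma KSi:
  assumes i: "1 \<le> i" "i \<le> n"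
  shows "Cmp C (kk (Suc n)) (dg n i) = Neg C (Cmp C (dg n (i - 1)) (kk n))"
proof -
  obtain p where p: "n = Suc p" using i by (cases n) auto
  obtain j where j: "i = Suc j" using i by (cases i) auto
  let ?X = "Mo n" and ?Y = "Mo (Suc n)" and ?Z = "Mo (Suc (Suc n))"
  have m: "dg n i \<in> Hom C ?X ?Y" "dg (Suc n) (Suc (Suc n)) \<in> Hom C ?Y ?Z"
    "fc (Suc (Suc n)) 0 \<in> Hom C ?Z ?Y" "dg n (Suc n) \<in> Hom C ?X ?Y"
    "fc (Suc n) 0 \<in> Hom C ?Y ?X" "dg (Suc n) i \<in> Hom C ?Y ?Z"
    "tt (Suc n) \<in> Hom C ?Y ?Y" "ee n \<in> Hom C ?Y ?Y" "dg n j \<in> Hom C ?X ?Y"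
    "tt n \<in> Hom C ?X ?X" "ee p \<in> Hom C ?X ?X" "dg p j \<in> Hom C (Mo p) ?X" "fc n 0 \<in> Hom C ?X (Mo p)"
    "dg p n \<in> Hom C (Mo p) ?X"
    using i p j by auto
  have a1: "Cmp C (tt (Suc n)) (dg n i) = Cmp C (dg n j) (tt n)"
  proof -
    have "Cmp C (tt (Suc n)) (dg n i) = Cmp C (fc (Suc (Suc n)) 0) (Cmp C (dg (Suc n) (Suc (Suc n))) (dg n i))"
      using assoc[OF m(1) m(2) m(3)] by simp
    also have "Cmp C (dg (Suc n) (Suc (Suc n))) (dg n i) = Cmp C (dg (Suc n) i) (dg n (Suc n))"
      using SS[of i "Suc (Suc n)" n] i by simp
    also have "Cmp C (fc (Suc (Suc n)) 0) (Cmp C (dg (Suc n) i) (dg n (Suc n))) =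
        Cmp C (Cmp C (fc (Suc (Suc n)) 0) (dg (Suc n) i)) (dg n (Suc n))"
      using assoc[OF m(4) m(6) m(3)] .
    also have "Cmp C (fc (Suc (Suc n)) 0) (dg (Suc n) i) = Cmp C (dg n j) (fc (Suc n) 0)"
      using FS_lt[of 0 i n] i j by simp
    also have "Cmp C (Cmp C (dg n j) (fc (Suc n) 0)) (dg n (Suc n)) = Cmp C (dg n j) (tt n)"
      using assoc[OF m(4) m(5) m(9)] by simp
    finally show ?thesis .
  qed
  have a2: "Cmp C (ee n) (dg n i) = Cmp C (dg n j) (ee p)"
  proof -
    have "Cmp C (ee n) (dg n i) = Cmp C (dg n (Suc n)) (Cmp C (fc (Suc n) 0) (dg n i))"
      using assoc[OF m(1) m(5) m(4)] by simp
    also have "Cmp C (fc (Suc n) 0) (dg n i) = Cmp C (dg p j) (fc n 0)"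
      using FS_lt[of 0 i p] i j p by simp
    also have "Cmp C (dg n (Suc n)) (Cmp C (dg p j) (fc n 0)) = Cmp C (Cmp C (dg n (Suc n)) (dg p j)) (fc n 0)"
      using assoc[OF m(13) m(12) m(4)] .
    also have "Cmp C (dg n (Suc n)) (dg p j) = Cmp C (dg n j) (dg p n)"
      using SS[of j "Suc n" p] i j p by simp
    also have "Cmp C (Cmp C (dg n j) (dg p n)) (fc n 0) = Cmp C (dg n j) (ee p)"
      using assoc[OF m(13) m(14) m(9)] p by simp
    finally show ?thesis .
  qed
  have "Cmp C (kk (Suc n)) (dg n i) = csgn C (Suc n) (Cmp C (Add C (tt (Suc n)) (Neg C (ee n))) (dg n i))"
    unfolding kappa_Suc using m by (intro csgn_cmp_l[of _ ?X ?Y _ ?Y]) (auto intro!: add_in neg_in)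
  also have "Cmp C (Add C (tt (Suc n)) (Neg C (ee n))) (dg n i) = Cmp C (dg n j) (Add C (tt n) (Neg C (ee p)))"
    using cmp_sub_l[OF m(1) m(7) m(8)] cmp_sub_r[OF m(10) m(11) m(9)] a1 a2 by simp
  also have "csgn C (Suc n) \<dots> = Neg C (Cmp C (dg n j) (csgn C n (Add C (tt n) (Neg C (ee p)))))"
    using csgn_Suc[OF cmp_in[OF add_in[OF m(10) neg_in[OF m(11)]] m(9)], of n]
      csgn_cmp_r[OF add_in[OF m(10) neg_in[OF m(11)]] m(9), of n] by simp
  also have "csgn C n (Add C (tt n) (Neg C (ee p))) = kk n" unfolding p kappa_Suc ..
  finally show ?thesis using j by simp
qed

lemma KPS: "i < k \<Longrightarrow> i \<le> n \<Longrightarrow> Cmp C (KP (Suc n) k) (dg n i) = Zer C (Mo n) (Mo (Suc n))"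
proof (induction k arbitrary: i)
  case 0 then show ?case by simp
next
  case (Suc k)
  let ?X = "Mo n" and ?Y = "Mo (Suc n)"
  note IH = Suc.IH and prems = Suc.prems
  have di: "dg n i \<in> Hom C ?X ?Y" using Suc by simp
  have "Cmp C (KP (Suc n) (Suc k)) (dg n i) = Cmp C (KP (Suc n) k) (Cmp C (kk (Suc n)) (dg n i))"
    unfolding kpow_Suc' using assoc[OF di kappa_in kpow_in] by simp
  also have "\<dots> = Zer C ?X ?Y"
  proof (cases i)
    case 0
    then show ?thesis using KS0[of n] cmp_zer_r[OF kpow_in, of ?X] by simp
  next
    case (Suc i')
    have di': "dg n i' \<in> Hom C ?X ?Y" using Suc \<open>i \<le> n\<close> by simp
    have "Cmp C (KP (Suc n) k) (Cmp C (kk (Suc n)) (dg n i)) = Cmp C (KP (Suc n) k) (Neg C (Cmp C (dg n i') (kk n)))"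
      using KSi[of i n] Suc \<open>i \<le> n\<close> by simp
    also have "\<dots> = Neg C (Cmp C (Cmp C (KP (Suc n) k) (dg n i')) (kk n))"
      using cmp_neg_r[OF cmp_in[OF kappa_in di'] kpow_in] assoc[OF kappa_in di' kpow_in] by simp
    also have "Cmp C (KP (Suc n) k) (dg n i') = Zer C ?X ?Y"
      using Suc prems by (intro IH) auto
    finally show ?thesis using cmp_zer_l[OF kappa_in, of ?Y] neg_zer[of ?X ?Y] by simp
  qed
  finally show ?case .
qed

lemma DK: "k \<le> Suc n \<Longrightarrow> Cmp C (fc (Suc n) 0) (KP (Suc n) k) = Cmp C (KP n k) (As n (Suc k))"
proof (induction k)
  case 0
  have "As n (Suc 0) = fc (Suc n) 0"
    unfolding As_def using csum_one[of "\<lambda>i. csgn C i (fc (Suc n) i)" "Mo (Suc n)" "Mo n"] by simp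
  then show ?case using idr[of "fc (Suc n) 0" "Mo (Suc n)" "Mo n"] idl[of "fc (Suc n) 0" "Mo (Suc n)" "Mo n"] by simp
next
  case (Suc k)
  have k: "k \<le> n" using Suc by simp
  have A1: "As n (Suc k) \<in> Hom C (Mo (Suc n)) (Mo n)" "As n (Suc (Suc k)) \<in> Hom C (Mo (Suc n)) (Mo n)"
    using k by auto
  have "Cmp C (fc (Suc n) 0) (KP (Suc n) (Suc k)) = Cmp C (Cmp C (fc (Suc n) 0) (KP (Suc n) k)) (kk (Suc n))"
    unfolding kpow_Suc' using assoc[OF kappa_in kpow_in face_in[of 0 n]] by simp
  also have "\<dots> = Cmp C (KP n k) (Cmp C (As n (Suc k)) (kk (Suc n)))"
    using Suc k assoc[OF kappa_in A1(1) kpow_in] by simp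
  also have "\<dots> = Cmp C (KP n (Suc k)) (As n (Suc (Suc k)))"
    unfolding AK[OF k] kpow_Suc' using assoc[OF A1(2) kappa_in kpow_in] by simp
  finally show ?case .
qed

lemma As_s: "Cmp C (As (Suc m) (Suc (Suc m))) (dg (Suc m) (Suc (Suc m))) =
   Add C (csgn C (Suc m) (kk (Suc m))) (Cmp C (dg m (Suc m)) (bb (Suc m)))"
proof -
  let ?n = "Suc m"
  let ?X = "Mo ?n" and ?Y = "Mo (Suc ?n)"
  let ?s = "dg ?n (Suc ?n)" and ?s' = "dg m ?n"
  have ms: "?s \<in> Hom C ?X ?Y" "?s' \<in> Hom C (Mo m) ?X" by auto
  define R where "R = csum C ?X ?X (\<lambda>i. csgn C (Suc i) (Cmp C ?s' (fc ?n (Suc i)))) ?n"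
  have Rin: "R \<in> Hom C ?X ?X" unfolding R_def by (rule csum_in) (auto intro!: csgn_in cmp_in[of _ _ "Mo m"])
  have L: "Cmp C (As ?n (Suc ?n)) ?s = Add C (tt ?n) R"
  proof -
    have "As ?n (Suc ?n) = Add C (fc (Suc ?n) 0) (csum C ?Y ?X (\<lambda>i. csgn C (Suc i) (fc (Suc ?n) (Suc i))) ?n)"
      unfolding As_def by (subst csum_first) (auto intro: csgn_in)
    moreover have c: "csum C ?Y ?X (\<lambda>i. csgn C (Suc i) (fc (Suc ?n) (Suc i))) ?n \<in> Hom C ?Y ?X"
      by (rule csum_in) (auto intro: csgn_in)
    moreover have "Cmp C (csum C ?Y ?X (\<lambda>i. csgn C (Suc i) (fc (Suc ?n) (Suc i))) ?n) ?s = R"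
    proof -
      have "Cmp C (csum C ?Y ?X (\<lambda>i. csgn C (Suc i) (fc (Suc ?n) (Suc i))) ?n) ?s =
          csum C ?X ?X (\<lambda>i. Cmp C (csgn C (Suc i) (fc (Suc ?n) (Suc i))) ?s) ?n"
        by (rule csum_cmp_l) (auto intro: csgn_in)
      also have "\<dots> = R" unfolding R_def
      proof (rule csum_cong)
        fix i assume i: "i < ?n"
        have "Cmp C (csgn C (Suc i) (fc (Suc ?n) (Suc i))) ?s = csgn C (Suc i) (Cmp C (fc (Suc ?n) (Suc i)) ?s)"
          using i by (intro csgn_cmp_l[of _ ?X ?Y _ ?X]) auto
        also have "Cmp C (fc (Suc ?n) (Suc i)) ?s = Cmp C ?s' (fc ?n (Suc i))"
          using FS_lt[of "Suc i" "Suc (Suc m)" m] i by simp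
        finally show "Cmp C (csgn C (Suc i) (fc (Suc ?n) (Suc i))) ?s = csgn C (Suc i) (Cmp C ?s' (fc ?n (Suc i)))" .
      qed
      finally show ?thesis .
    qed
    ultimately show ?thesis using distl[OF ms(1) face_in[of 0 ?n] c] by simp
  qed
  have B: "Cmp C ?s' (bb ?n) = Add C (ee m) R"
  proof -
    have "bb ?n = Add C (fc ?n 0) (csum C ?X (Mo m) (\<lambda>i. csgn C (Suc i) (fc ?n (Suc i))) ?n)"
      unfolding bop_Suc by (subst csum_first) (auto intro: csgn_in)
    moreover have c: "csum C ?X (Mo m) (\<lambda>i. csgn C (Suc i) (fc ?n (Suc i))) ?n \<in> Hom C ?X (Mo m)"
      by (rule csum_in) (auto intro: csgn_in)
    moreover have "Cmp C ?s' (csum C ?X (Mo m) (\<lambda>i. csgn C (Suc i) (fc ?n (Suc i))) ?n) = R"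
    proof -
      have "Cmp C ?s' (csum C ?X (Mo m) (\<lambda>i. csgn C (Suc i) (fc ?n (Suc i))) ?n) =
          csum C ?X ?X (\<lambda>i. Cmp C ?s' (csgn C (Suc i) (fc ?n (Suc i)))) ?n"
        by (rule csum_cmp_r) (auto intro: csgn_in)
      also have "\<dots> = R" unfolding R_def
        by (rule csum_cong) (auto intro!: csgn_cmp_r[of _ ?X "Mo m" _ ?X])
      finally show ?thesis .
    qed
    ultimately show ?thesis using distr[OF face_in[of 0 m] c ms(2)] by simp
  qed
  have k: "csgn C ?n (kk ?n) = Add C (tt ?n) (Neg C (ee m))"
    unfolding kappa_Suc by (rule csgn_csgn[OF add_in[OF tt_in neg_in[OF ee_in]]])
  have "Add C (csgn C ?n (kk ?n)) (Cmp C ?s' (bb ?n)) = Add C (Add C (tt ?n) (Neg C (ee m))) (Add C (ee m) R)"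
    unfolding k B ..
  also have "\<dots> = Add C (tt ?n) (Add C (Neg C (ee m)) (Add C (ee m) R))"
    using add_assoc[OF tt_in neg_in[OF ee_in] add_in[OF ee_in Rin]] .
  also have "Add C (Neg C (ee m)) (Add C (ee m) R) = R"
    using add_assoc[OF neg_in[OF ee_in] ee_in Rin, symmetric] neg_add_l[OF ee_in] zer_add[OF Rin] by simp
  finally show ?thesis using L by simp
qed

lemma pi0: "PI 0 = kk 0"
  unfolding piop_def kappa_0 using idl[of "dg 0 1" "Mo 0" "Mo 1"] by simp

lemma piS: "PI (Suc m) = Add C (KP (Suc m) (Suc (Suc m))) (Cmp C (KP (Suc m) (Suc m)) (Cmp C (dd m) (bb (Suc m))))"
proof -
  let ?n = "Suc m"
  let ?X = "Mo ?n"
  let ?K = "KP ?n ?n"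
  have mm: "As ?n (Suc ?n) \<in> Hom C (Mo (Suc ?n)) ?X" "dg ?n (Suc ?n) \<in> Hom C ?X (Mo (Suc ?n))"
    "dg m ?n \<in> Hom C (Mo m) ?X" "bb ?n \<in> Hom C ?X (Mo m)" by auto
  have sb: "Cmp C (dg m ?n) (bb ?n) \<in> Hom C ?X ?X" using cmp_in[OF mm(4) mm(3)] .
  have ck: "csgn C ?n (kk ?n) \<in> Hom C ?X ?X" by (rule csgn_in) simp
  have "Cmp C (fc (Suc ?n) 0) (Cmp C (KP (Suc ?n) ?n) (dg ?n (Suc ?n))) =
      Cmp C (Cmp C (fc (Suc ?n) 0) (KP (Suc ?n) ?n)) (dg ?n (Suc ?n))"
    using assoc[OF mm(2) kpow_in face_in[of 0 ?n]] by simp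
  also have "\<dots> = Cmp C ?K (Cmp C (As ?n (Suc ?n)) (dg ?n (Suc ?n)))"
    using DK[of ?n ?n] assoc[OF mm(2) mm(1) kpow_in] by simp
  also have "\<dots> = Add C (csgn C ?n (Cmp C ?K (kk ?n))) (Cmp C ?K (Cmp C (dg m ?n) (bb ?n)))"
    unfolding As_s using distr[OF ck sb kpow_in] csgn_cmp_r[OF kappa_in kpow_in] by simp
  finally have e1: "PI ?n = csgn C ?n (Add C (csgn C ?n (Cmp C ?K (kk ?n))) (Cmp C ?K (Cmp C (dg m ?n) (bb ?n))))"
    unfolding piop_def by simp
  have e2: "Cmp C ?K (Cmp C (dd m) (bb ?n)) = csgn C ?n (Cmp C ?K (Cmp C (dg m ?n) (bb ?n)))"
  proof -
    have d: "dd m = Add C (csum C (Mo m) ?X (\<lambda>i. csgn C i (dg m i)) ?n) (csgn C ?n (dg m ?n))"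
      unfolding dop_eq by (rule csum_Suc) (auto intro: csgn_in)
    have c: "csum C (Mo m) ?X (\<lambda>i. csgn C i (dg m i)) ?n \<in> Hom C (Mo m) ?X"
      by (rule csum_in) (auto intro: csgn_in)
    have z: "Cmp C ?K (csum C (Mo m) ?X (\<lambda>i. csgn C i (dg m i)) ?n) = Zer C (Mo m) ?X"
    proof -
      have "Cmp C ?K (csum C (Mo m) ?X (\<lambda>i. csgn C i (dg m i)) ?n) =
          csum C (Mo m) ?X (\<lambda>i. Cmp C ?K (csgn C i (dg m i))) ?n"
        by (rule csum_cmp_r) (auto intro: csgn_in)
      also have "\<dots> = Zer C (Mo m) ?X"
      proof (rule csum_zero)
        fix i assume i: "i < ?n"
        have "Cmp C ?K (csgn C i (dg m i)) = csgn C i (Cmp C ?K (dg m i))"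
          using i by (intro csgn_cmp_r[of _ "Mo m" ?X _ ?X]) auto
        also have "Cmp C ?K (dg m i) = Zer C (Mo m) ?X" using KPS[of i ?n m] i by simp
        finally show "Cmp C ?K (csgn C i (dg m i)) = Zer C (Mo m) ?X" using csgn_zer by simp
      qed auto
      finally show ?thesis .
    qed
    have "Cmp C ?K (Cmp C (dd m) (bb ?n)) = Cmp C (Cmp C ?K (dd m)) (bb ?n)"
      using assoc[OF mm(4) dop_in kpow_in] .
    also have "Cmp C ?K (dd m) = Add C (Zer C (Mo m) ?X) (csgn C ?n (Cmp C ?K (dg m ?n)))"
      unfolding d using distr[OF c csgn_in[OF mm(3)] kpow_in] z csgn_cmp_r[OF mm(3) kpow_in] by simp
    also have "\<dots> = csgn C ?n (Cmp C ?K (dg m ?n))"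
      using zer_add[OF csgn_in[OF cmp_in[OF mm(3) kpow_in]]] .
    also have "Cmp C (csgn C ?n (Cmp C ?K (dg m ?n))) (bb ?n) = csgn C ?n (Cmp C ?K (Cmp C (dg m ?n) (bb ?n)))"
      using csgn_cmp_l[OF mm(4) cmp_in[OF mm(3) kpow_in]] assoc[OF mm(4) mm(3) kpow_in] by simp
    finally show ?thesis .
  qed
  have a: "Cmp C ?K (kk ?n) \<in> Hom C ?X ?X" "Cmp C ?K (Cmp C (dg m ?n) (bb ?n)) \<in> Hom C ?X ?X"
    using cmp_in[OF kappa_in kpow_in] cmp_in[OF sb kpow_in] by auto
  show ?thesis unfolding e1 e2 kpow_Suc'[of ?n ?n]
    using csgn_Add[OF csgn_in[OF a(1)] a(2), of ?n] csgn_csgn[OF a(1), of ?n] by simp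
qed

end

context dup
begin

abbreviation "DD \<equiv> Dop C Mo Mf"

lemma Dop_Suc: "DD (Suc m) = csum C (Mo (Suc m)) (Mo m) (\<lambda>i. Cmp C (bb (Suc m)) (KP (Suc m) i)) (Suc m)"
  unfolding Dop_def by simp

lemma Dop_in: "DD (Suc m) \<in> Hom C (Mo (Suc m)) (Mo m)"
  unfolding Dop_Suc by (rule csum_in) (auto intro: cmp_in[OF kpow_in bop_in])

lemma G4: "S \<in> Hom C X Y \<Longrightarrow> I \<in> Hom C X Y \<Longrightarrow> K \<in> Hom C X Y \<Longrightarrow> W \<in> Hom C X Y \<Longrightarrow>
  Add C S (Add C (Add C I (Neg C K)) (Neg C (Add C S W))) = Add C I (Neg C (Add C K W))"
proof -
  assume S: "S \<in> Hom C X Y" and I: "I \<in> Hom C X Y" and K: "K \<in> Hom C X Y" and W: "W \<in> Hom C X Y"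
  have IK: "Add C I (Neg C K) \<in> Hom C X Y" using I K by (intro add_in neg_in)
  have "Add C S (Add C (Add C I (Neg C K)) (Neg C (Add C S W))) =
      Add C S (Add C (Add C I (Neg C K)) (Add C (Neg C S) (Neg C W)))" using neg_add[OF S W] by simp
  also have "\<dots> = Add C (Add C I (Neg C K)) (Add C S (Add C (Neg C S) (Neg C W)))"
    using add_left_comm[OF S IK add_in[OF neg_in[OF S] neg_in[OF W]]] .
  also have "Add C S (Add C (Neg C S) (Neg C W)) = Neg C W"
    using add_assoc[OF S neg_in[OF S] neg_in[OF W], symmetric] add_neg[OF S] zer_add[OF neg_in[OF W]] by simp
  also have "Add C (Add C I (Neg C K)) (Neg C W) = Add C I (Add C (Neg C K) (Neg C W))"
    using add_assoc[OF I neg_in[OF K] neg_in[OF W]] .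
  also have "Add C (Neg C K) (Neg C W) = Neg C (Add C K W)" using neg_add[OF K W] by simp
  finally show ?thesis .
qed

lemma solve_add: "a \<in> Hom C X Y \<Longrightarrow> b \<in> Hom C X Y \<Longrightarrow> Add C a b = c \<Longrightarrow> a = Add C c (Neg C b)"
proof -
  assume a: "a \<in> Hom C X Y" and b: "b \<in> Hom C X Y" and e: "Add C a b = c"
  have "Add C c (Neg C b) = Add C a (Add C b (Neg C b))" using e add_assoc[OF a b neg_in[OF b]] by simp
  then show ?thesis using add_neg[OF b] add_zer[OF a] by simp
qed

lemma main0: "Add C (Zer C (Mo 0) (Mo 0)) (Cmp C (DD (Suc 0)) (dd 0)) = Add C (II 0) (Neg C (PI 0))"
proof -
  have "DD (Suc 0) = Cmp C (bb 1) (KP 1 0)"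
    unfolding Dop_Suc using csum_one[of "\<lambda>i. Cmp C (bb (Suc 0)) (KP (Suc 0) i)" "Mo 1" "Mo 0"]
      cmp_in[OF II_in bop_in[of 0]] by simp
  also have "\<dots> = bb 1" using idr[OF bop_in[of 0]] by simp
  finally have D: "DD (Suc 0) = bb 1" .
  show ?thesis unfolding D pi0 using bd0 zer_add[OF cmp_in[OF dop_in bop_in[of 0]]] by simp
qed

lemma main1: "Add C (Cmp C (dd m) (DD (Suc m))) (Cmp C (DD (Suc (Suc m))) (dd (Suc m))) =
   Add C (II (Suc m)) (Neg C (PI (Suc m)))"
proof -
  let ?n = "Suc m"
  let ?X = "Mo ?n"
  define Y where "Y = Cmp C (dd m) (bb ?n)"
  define Xb where "Xb = Cmp C (bb (Suc ?n)) (dd ?n)"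
  have Yin: "Y \<in> Hom C ?X ?X" unfolding Y_def using cmp_in[OF bop_in[of m] dop_in[of m]] .
  have Xin: "Xb \<in> Hom C ?X ?X" unfolding Xb_def using cmp_in[OF dop_in[of ?n] bop_in[of ?n]] .
  have YK: "Cmp C Y (KP ?n i) = Cmp C (KP ?n i) Y" for i
  proof -
    have "Cmp C Y (KP ?n i) = Cmp C (dd m) (Cmp C (bb ?n) (KP ?n i))"
      unfolding Y_def using assoc[OF kpow_in bop_in[of m] dop_in[of m]] by simp
    also have "Cmp C (bb ?n) (KP ?n i) = Cmp C (KP m i) (bb ?n)" using KB[of m i] by simp
    also have "Cmp C (dd m) (Cmp C (KP m i) (bb ?n)) = Cmp C (Cmp C (dd m) (KP m i)) (bb ?n)"
      using assoc[OF bop_in[of m] kpow_in dop_in[of m]] .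
    also have "Cmp C (dd m) (KP m i) = Cmp C (KP ?n i) (dd m)" using KD[of m i] by simp
    also have "Cmp C (Cmp C (KP ?n i) (dd m)) (bb ?n) = Cmp C (KP ?n i) Y"
      unfolding Y_def using assoc[OF bop_in[of m] dop_in[of m] kpow_in] by simp
    finally show ?thesis .
  qed
  have s1: "Cmp C (dd m) (DD ?n) = csum C ?X ?X (\<lambda>i. Cmp C Y (KP ?n i)) ?n"
  proof -
    have "Cmp C (dd m) (DD ?n) = csum C ?X ?X (\<lambda>i. Cmp C (dd m) (Cmp C (bb ?n) (KP ?n i))) ?n"
      unfolding Dop_Suc by (rule csum_cmp_r) (auto intro: cmp_in[OF kpow_in bop_in])
    also have "\<dots> = csum C ?X ?X (\<lambda>i. Cmp C Y (KP ?n i)) ?n"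
      unfolding Y_def by (rule csum_cong) (use assoc[OF kpow_in bop_in[of m] dop_in[of m]] in simp)
    finally show ?thesis .
  qed
  have s2: "Cmp C (DD (Suc ?n)) (dd ?n) = csum C ?X ?X (\<lambda>i. Cmp C Xb (KP ?n i)) (Suc ?n)"
  proof -
    have "Cmp C (DD (Suc ?n)) (dd ?n) = csum C ?X ?X (\<lambda>i. Cmp C (Cmp C (bb (Suc ?n)) (KP (Suc ?n) i)) (dd ?n)) (Suc ?n)"
      unfolding Dop_Suc by (rule csum_cmp_l) (auto intro: cmp_in[OF kpow_in bop_in])
    also have "\<dots> = csum C ?X ?X (\<lambda>i. Cmp C Xb (KP ?n i)) (Suc ?n)"
    proof (rule csum_cong)
      fix i
      have "Cmp C (Cmp C (bb (Suc ?n)) (KP (Suc ?n) i)) (dd ?n) = Cmp C (bb (Suc ?n)) (Cmp C (KP (Suc ?n) i) (dd ?n))"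
        using assoc[OF dop_in kpow_in bop_in] by simp
      also have "Cmp C (KP (Suc ?n) i) (dd ?n) = Cmp C (dd ?n) (KP ?n i)" using KD .
      also have "Cmp C (bb (Suc ?n)) (Cmp C (dd ?n) (KP ?n i)) = Cmp C Xb (KP ?n i)"
        unfolding Xb_def using assoc[OF kpow_in dop_in bop_in] .
      finally show "Cmp C (Cmp C (bb (Suc ?n)) (KP (Suc ?n) i)) (dd ?n) = Cmp C Xb (KP ?n i)" .
    qed
    finally show ?thesis .
  qed
  have Xeq: "Xb = Add C (Add C (II ?n) (Neg C (kk ?n))) (Neg C Y)"
    using solve_add[OF Xin Yin] bd_suc[of m] unfolding Xb_def Y_def by simp
  have XK: "Cmp C Xb (KP ?n i) = Add C (Add C (KP ?n i) (Neg C (KP ?n (Suc i)))) (Neg C (Cmp C Y (KP ?n i)))" for i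
  proof -
    have a: "Add C (II ?n) (Neg C (kk ?n)) \<in> Hom C ?X ?X" by (intro add_in neg_in) auto
    have "Cmp C Xb (KP ?n i) = Add C (Cmp C (Add C (II ?n) (Neg C (kk ?n))) (KP ?n i)) (Neg C (Cmp C Y (KP ?n i)))"
      unfolding Xeq using cmp_sub_l[OF kpow_in a Yin] .
    also have "Cmp C (Add C (II ?n) (Neg C (kk ?n))) (KP ?n i) = Add C (KP ?n i) (Neg C (KP ?n (Suc i)))"
      using cmp_sub_l[OF kpow_in II_in kappa_in] idl[OF kpow_in] kpow_Suc by simp
    finally show ?thesis .
  qed
  define S where "S = csum C ?X ?X (\<lambda>i. Cmp C Y (KP ?n i)) ?n"
  have Sin: "S \<in> Hom C ?X ?X" unfolding S_def by (rule csum_in) (auto intro: cmp_in[OF kpow_in Yin])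
  have YKin: "\<And>i. Cmp C Y (KP ?n i) \<in> Hom C ?X ?X" using cmp_in[OF kpow_in Yin] by simp
  have "csum C ?X ?X (\<lambda>i. Cmp C Xb (KP ?n i)) (Suc ?n) =
      csum C ?X ?X (\<lambda>i. Add C (Add C (KP ?n i) (Neg C (KP ?n (Suc i)))) (Neg C (Cmp C Y (KP ?n i)))) (Suc ?n)"
    using XK by (intro csum_cong) auto
  also have "\<dots> = Add C (csum C ?X ?X (\<lambda>i. Add C (KP ?n i) (Neg C (KP ?n (Suc i)))) (Suc ?n))
      (csum C ?X ?X (\<lambda>i. Neg C (Cmp C Y (KP ?n i))) (Suc ?n))"
    by (rule csum_add) (auto intro!: add_in neg_in YKin)
  also have "csum C ?X ?X (\<lambda>i. Add C (KP ?n i) (Neg C (KP ?n (Suc i)))) (Suc ?n) = Add C (II ?n) (Neg C (KP ?n (Suc ?n)))"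
    using csum_tele[of ?X ?X "Suc ?n" "KP ?n"] by simp
  also have "csum C ?X ?X (\<lambda>i. Neg C (Cmp C Y (KP ?n i))) (Suc ?n) = Neg C (csum C ?X ?X (\<lambda>i. Cmp C Y (KP ?n i)) (Suc ?n))"
    by (rule csum_neg) (auto intro: YKin)
  also have "csum C ?X ?X (\<lambda>i. Cmp C Y (KP ?n i)) (Suc ?n) = Add C S (Cmp C Y (KP ?n ?n))"
    unfolding S_def by (rule csum_Suc) (auto intro: YKin)
  finally have s2': "Cmp C (DD (Suc ?n)) (dd ?n) = Add C (Add C (II ?n) (Neg C (KP ?n (Suc ?n)))) (Neg C (Add C S (Cmp C Y (KP ?n ?n))))"
    using s2 by simp
  have P: "PI ?n = Add C (KP ?n (Suc ?n)) (Cmp C Y (KP ?n ?n))"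
    using piS[of m] YK[of ?n] unfolding Y_def by simp
  show ?thesis unfolding s1 s2' P S_def[symmetric]
    by (rule G4[OF Sin II_in kpow_in YKin])
qed

lemma main2: "Cmp C (DD (Suc p)) (DD (Suc (Suc p))) = Zer C (Mo (Suc (Suc p))) (Mo p)"
proof -
  let ?X = "Mo (Suc (Suc p))" and ?Y = "Mo p"
  have F: "\<And>i. Cmp C (bb (Suc p)) (KP (Suc p) i) \<in> Hom C (Mo (Suc p)) ?Y"
    using cmp_in[OF kpow_in bop_in] by simp
  have G: "\<And>j. Cmp C (bb (Suc (Suc p))) (KP (Suc (Suc p)) j) \<in> Hom C ?X (Mo (Suc p))"
    using cmp_in[OF kpow_in bop_in] by simp
  have "Cmp C (DD (Suc p)) (DD (Suc (Suc p))) =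
      csum C ?X ?Y (\<lambda>i. Cmp C (Cmp C (bb (Suc p)) (KP (Suc p) i)) (DD (Suc (Suc p)))) (Suc p)"
    unfolding Dop_Suc[of p] by (rule csum_cmp_l) (auto intro: F Dop_in)
  also have "\<dots> = Zer C ?X ?Y"
  proof (rule csum_zero)
    fix i
    have "Cmp C (Cmp C (bb (Suc p)) (KP (Suc p) i)) (DD (Suc (Suc p))) =
        csum C ?X ?Y (\<lambda>j. Cmp C (Cmp C (bb (Suc p)) (KP (Suc p) i)) (Cmp C (bb (Suc (Suc p))) (KP (Suc (Suc p)) j))) (Suc (Suc p))"
      unfolding Dop_Suc[of "Suc p"] by (rule csum_cmp_r) (auto intro: F G)
    also have "\<dots> = Zer C ?X ?Y"
    proof (rule csum_zero)
      fix j
      let ?b = "bb (Suc p)" and ?b' = "bb (Suc (Suc p))" and ?K = "KP (Suc p) i" and ?K' = "KP (Suc (Suc p)) j"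
        and ?K'' = "KP (Suc (Suc p)) i"
      have "Cmp C (Cmp C ?b ?K) (Cmp C ?b' ?K') = Cmp C ?b (Cmp C ?K (Cmp C ?b' ?K'))"
        using assoc[OF cmp_in[OF kpow_in bop_in] kpow_in bop_in] by simp
      also have "Cmp C ?K (Cmp C ?b' ?K') = Cmp C (Cmp C ?K ?b') ?K'"
        using assoc[OF kpow_in bop_in kpow_in] .
      also have "Cmp C ?K ?b' = Cmp C ?b' ?K''" using KB .
      also have "Cmp C (Cmp C ?b' ?K'') ?K' = Cmp C ?b' (Cmp C ?K'' ?K')"
        using assoc[OF kpow_in kpow_in bop_in] by simp
      also have "Cmp C ?b (Cmp C ?b' (Cmp C ?K'' ?K')) = Cmp C (Cmp C ?b ?b') (Cmp C ?K'' ?K')"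
        using assoc[OF cmp_in[OF kpow_in kpow_in] bop_in bop_in] .
      also have "Cmp C ?b ?b' = Zer C ?X (Mo p)" using bb_sq .
      finally show "Cmp C (Cmp C ?b ?K) (Cmp C ?b' ?K') = Zer C ?X ?Y"
        using cmp_zer_l[OF cmp_in[OF kpow_in kpow_in], of ?Y] by simp
    qed auto
    finally show "Cmp C (Cmp C (bb (Suc p)) (KP (Suc p) i)) (DD (Suc (Suc p))) = Zer C ?X ?Y" .
  qed auto
  finally show ?thesis .
qed

end

theorem mainTheorem18:
  fixes C :: "('o, 'm, 'z) preadd_cat_scheme"
    and Mo :: "nat \<Rightarrow> 'o"
    and Mf :: "nat \<Rightarrow> nat \<Rightarrow> (int \<Rightarrow> int) \<Rightarrow> 'm"
  assumes "duplicial C Mo Mf"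
  shows "(\<forall>n. Add C (if n = 0 then Zer C (Mo 0) (Mo 0)
                     else Cmp C (dop C Mo Mf (n - 1)) (Dop C Mo Mf n))
                  (Cmp C (Dop C Mo Mf (n + 1)) (dop C Mo Mf n))
            = Add C (Idm C (Mo n)) (Neg C (piop C Mo Mf n))) \<and>
         (\<forall>n\<ge>2. Cmp C (Dop C Mo Mf (n - 1)) (Dop C Mo Mf n) = Zer C (Mo n) (Mo (n - 2)))"
proof -
  interpret dup C Mo Mf
    by unfold_locales (use assms in \<open>simp_all add: duplicial_def\<close>)
  show ?thesis
  proof (intro conjI allI impI)
    fix n
    show "Add C (if n = 0 then Zer C (Mo 0) (Mo 0)
                     else Cmp C (dop C Mo Mf (n - 1)) (Dop C Mo Mf n))
                  (Cmp C (Dop C Mo Mf (n + 1)) (dop C Mo Mf n))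
            = Add C (Idm C (Mo n)) (Neg C (piop C Mo Mf n))"
    proof (cases n)
      case 0 then show ?thesis using main0 by simp
    next
      case (Suc m) then show ?thesis using main1[of m] by simp
    qed
  next
    fix n :: nat assume n: "2 \<le> n"
    then obtain p where p: "n = Suc (Suc p)" by (metis add_2_eq_Suc le_Suc_ex)
    show "Cmp C (Dop C Mo Mf (n - 1)) (Dop C Mo Mf n) = Zer C (Mo n) (Mo (n - 2))"
      using main2[of p] p by simp
  qed
qed


end
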